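(* Let $n\ge3$, let $p:[\mathcal Q:\xi]\to[\mathcal H:\partial]$ be a trivial fibration and $f:[\mathcal Q:\xi]\to[\mathcal G:\delta]$ a morphism of reduced $n$-crossed complexes, $\nabla^f=(p,f)$, and $P=\mathcal Q_{n-1}\times^{\mathcal Q_n}(\mathcal H_n\times\mathcal G_n)$ the degree $n-1$ group of $\mathcal Q^{\nabla^f_n}$. Define $i:\mathcal G_n\to P$ by $i(c)=[1,(1,c)]$ and $u:P\to\ker\xi_{n-2}\times_{\ker\partial_{n-2}}\mathcal H_{n-1}$ by $u([a,(b,c)])=(\xi_{n-1}(a),\,p_{n-1}(a)\partial_n(b))$. Then the sequence $$1\to\mathcal G_n\xrightarrow{i}P\xrightarrow{u}\ker\xi_{n-2}\times_{\ker\partial_{n-2}}\mathcal H_{n-1}\to1$$ is exact, and for every $k\le n-2$ the map $u_k:\mathcal Q_k\to\ker\xi_{k-1}\times_{\ker\partial_{k-1}}\mathcal H_k$, $x\mapsto(\xi_k(x),p_k(x))$, is surjective.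
   Context: A reduced $n$-crossed complex $[C:\partial]$ is a sequence of groups and homomorphisms $C_n\xrightarrow{\partial_n}C_{n-1}\to\cdots\to C_2\xrightarrow{\partial_2}C_1$ with an action of $C_1$ on each $C_k$ ($k\ge2$), such that $\partial_2$ is a crossed module, $C_k$ is abelian for $k\ge3$, each $\partial_k$ is $C_1$-equivariant, $\partial_{k-1}\partial_k$ is trivial, and $\partial_2(C_2)$ acts trivially on $C_k$ for $k\ge3$; morphisms are families of homomorphisms commuting with differentials and actions; products are degreewise. Homotopy groups: $\pi_1(C)=C_1/\partial_2(C_2)$, $\pi_k(C)=\ker\partial_k/\operatorname{im}\partial_{k+1}$ ($2\le k\le n-1$), $\pi_n(C)=\ker\partial_n$. Weak equivalence: isomorphism on all $\pi_k$; fibration: surjective in each degree; trivial fibration: both. For $p:[\mathcal Q:\xi]\to[\mathcal H:\partial]$, $\ker\xi_{k-1}\times_{\ker\partial_{k-1}}\mathcal H_k$ denotes the fibre product of $p_{k-1}:\ker\xi_{k-1}\to\ker\partial_{k-1}$ and $\partial_k:\mathcal H_k\to\ker\partial_{k-1}$, with conventions $\ker\xi_0=\ker\partial_0=1$, $\ker\xi_1=\mathcal Q_1$, $\ker\partial_1=\mathcal H_1$. The $n$-pushout $\mathcal Q^{\nabla_n}$ of $\nabla=(p,f):\mathcal Q\to\mathcal K=\mathcal H\times\mathcal G$: equal to $\mathcal Q$ in degrees $\le n-2$, degree $n$ group $\mathcal K_n$, degree $n-1$ group $P$, the quotient of the (semi)direct product $\mathcal Q_{n-1}\ltimes\mathcal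 K_n$ (for $n=3$, $\mathcal Q_2$ acts on $\mathcal K_3$ via $\nabla_1\circ\xi_2$; for $n\ge4$ direct) by the normal subgroup of elements $(\xi_n(x)^{-1},\nabla_n(x))$, $x\in\mathcal Q_n$, with elements written $[a,(b,c)]$; differentials $(b,c)\mapsto[1,(b,c)]$ and $[a,(b,c)]\mapsto\xi_{n-1}(a)$. *)

theory Defs
  imports "HOL-Algebra.Coset"
begin

text \<open>A reduced n-crossed complex is given by groups C k (1 <= k <= n),
  differentials d k : C k -> C (k-1) (2 <= k <= n), and actions act k g x of
  g in C 1 on x in C k (2 <= k <= n).\<close>

definition reduced_ncc ::
  "nat \<Rightarrow> (nat \<Rightarrow> 'a monoid) \<Rightarrow> (nat \<Rightarrow> 'a \<Rightarrow> 'a) \<Rightarrow> (nat \<Rightarrow> 'a \<Rightarrow> 'a \<Rightarrow> 'a) \<Rightarrow> bool" where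
  "reduced_ncc n C d act \<longleftrightarrow>
     (\<forall>k\<in>{1..n}. group (C k))
   \<and> (\<forall>k\<in>{3..n}. comm_group (C k))
   \<and> (\<forall>k\<in>{2..n}. d k \<in> hom (C k) (C (k-1)))
   \<and> (\<forall>k\<in>{2..n}. \<forall>g\<in>carrier (C 1). \<forall>x\<in>carrier (C k). act k g x \<in> carrier (C k))
   \<and> (\<forall>k\<in>{2..n}. \<forall>x\<in>carrier (C k). act k \<one>\<^bsub>C 1\<^esub> x = x)
   \<and> (\<forall>k\<in>{2..n}. \<forall>g\<in>carrier (C 1). \<forall>h\<in>carrier (C 1). \<forall>x\<in>carrier (C k).
        act k (g \<otimes>\<^bsub>C 1\<^esub> h) x = act k g (act k h x))
   \<and> (\<forall>k\<in>{2..n}. \<forall>g\<in>carrier (C 1). \<forall>x\<in>carrier (C k). \<forall>y\<in>carrier (C k).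
        act k g (x \<otimes>\<^bsub>C k\<^esub> y) = act k g x \<otimes>\<^bsub>C k\<^esub> act k g y)
   \<and> (\<forall>g\<in>carrier (C 1). \<forall>x\<in>carrier (C 2).
        d 2 (act 2 g x) = g \<otimes>\<^bsub>C 1\<^esub> d 2 x \<otimes>\<^bsub>C 1\<^esub> inv\<^bsub>C 1\<^esub> g)
   \<and> (\<forall>x\<in>carrier (C 2). \<forall>y\<in>carrier (C 2).
        act 2 (d 2 x) y = x \<otimes>\<^bsub>C 2\<^esub> y \<otimes>\<^bsub>C 2\<^esub> inv\<^bsub>C 2\<^esub> x)
   \<and> (\<forall>k\<in>{3..n}. \<forall>g\<in>carrier (C 1). \<forall>x\<in>carrier (C k). d k (act k g x) = act (k-1) g (d k x))
   \<and> (\<forall>k\<in>{3..n}. \<forall>x\<in>carrier (C k). d (k-1) (d k x) = \<one>\<^bsub>C (k-2)\<^esub>)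
   \<and> (\<forall>k\<in>{3..n}. \<forall>y\<in>carrier (C 2). \<forall>x\<in>carrier (C k). act k (d 2 y) x = x)"

definition ncc_morphism ::
  "nat \<Rightarrow> (nat \<Rightarrow> 'a monoid) \<Rightarrow> (nat \<Rightarrow> 'a \<Rightarrow> 'a) \<Rightarrow> (nat \<Rightarrow> 'a \<Rightarrow> 'a \<Rightarrow> 'a)
       \<Rightarrow> (nat \<Rightarrow> 'b monoid) \<Rightarrow> (nat \<Rightarrow> 'b \<Rightarrow> 'b) \<Rightarrow> (nat \<Rightarrow> 'b \<Rightarrow> 'b \<Rightarrow> 'b)
       \<Rightarrow> (nat \<Rightarrow> 'a \<Rightarrow> 'b) \<Rightarrow> bool" where
  "ncc_morphism n C d act D e act' F \<longleftrightarrow>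
     reduced_ncc n C d act \<and> reduced_ncc n D e act'
   \<and> (\<forall>k\<in>{1..n}. F k \<in> hom (C k) (D k))
   \<and> (\<forall>k\<in>{2..n}. \<forall>x\<in>carrier (C k). F (k-1) (d k x) = e k (F k x))
   \<and> (\<forall>k\<in>{2..n}. \<forall>g\<in>carrier (C 1). \<forall>x\<in>carrier (C k).
        F k (act k g x) = act' k (F 1 g) (F k x))"

text \<open>ker of the differential out of degree j; conventions: ker d_1 = C 1,
  and ker d_0 = trivial group, represented as the one-point set {1 of C 1}.\<close>
definition kerC :: "(nat \<Rightarrow> 'a monoid) \<Rightarrow> (nat \<Rightarrow> 'a \<Rightarrow> 'a) \<Rightarrow> nat \<Rightarrow> 'a set" where
  "kerC C d j = (if j = 0 then {\<one>\<^bsub>C 1\<^esub>} else if j = 1 then carrier (C 1)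
                 else {x \<in> carrier (C j). d j x = \<one>\<^bsub>C (j-1)\<^esub>})"

definition imC :: "nat \<Rightarrow> (nat \<Rightarrow> 'a monoid) \<Rightarrow> (nat \<Rightarrow> 'a \<Rightarrow> 'a) \<Rightarrow> nat \<Rightarrow> 'a set" where
  "imC n C d k = (if k = n then {\<one>\<^bsub>C n\<^esub>} else d (Suc k) ` carrier (C (Suc k)))"

definition pi_grp :: "nat \<Rightarrow> (nat \<Rightarrow> 'a monoid) \<Rightarrow> (nat \<Rightarrow> 'a \<Rightarrow> 'a) \<Rightarrow> nat \<Rightarrow> 'a set monoid" where
  "pi_grp n C d k = ((C k)\<lparr>carrier := kerC C d k\<rparr>) Mod (imC n C d k)"

definition pi_map :: "nat \<Rightarrow> (nat \<Rightarrow> 'b monoid) \<Rightarrow> (nat \<Rightarrow> 'b \<Rightarrow> 'b) \<Rightarrow> (nat \<Rightarrow> 'a \<Rightarrow> 'b)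
                       \<Rightarrow> nat \<Rightarrow> 'a set \<Rightarrow> 'b set" where
  "pi_map n D e F k S = imC n D e k #>\<^bsub>D k\<^esub> F k (SOME x. x \<in> S)"

definition ncc_weak_equivalence where
  "ncc_weak_equivalence n C d act D e act' F \<longleftrightarrow>
     ncc_morphism n C d act D e act' F
   \<and> (\<forall>k\<in>{1..n}. pi_map n D e F k \<in> iso (pi_grp n C d k) (pi_grp n D e k))"

definition ncc_fibration where
  "ncc_fibration n C d act D e act' F \<longleftrightarrow>
     ncc_morphism n C d act D e act' F
   \<and> (\<forall>k\<in>{1..n}. F k ` carrier (C k) = carrier (D k))"

definition ncc_trivial_fibration where
  "ncc_trivial_fibration n C d act D e act' F \<longleftrightarrow>
     ncc_fibration n C d act D e act' F \<and> ncc_weak_equivalence n C d act D e act' F"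

definition fibC :: "(nat \<Rightarrow> 'q monoid) \<Rightarrow> (nat \<Rightarrow> 'q \<Rightarrow> 'q) \<Rightarrow> (nat \<Rightarrow> 'h monoid) \<Rightarrow> (nat \<Rightarrow> 'h \<Rightarrow> 'h)
                    \<Rightarrow> (nat \<Rightarrow> 'q \<Rightarrow> 'h) \<Rightarrow> nat \<Rightarrow> ('q \<times> 'h) set" where
  "fibC Q xi H dH p k = {(x, y). x \<in> kerC Q xi (k-1) \<and> y \<in> carrier (H k)
                                 \<and> (k \<ge> 2 \<longrightarrow> p (k-1) x = dH k y)}"

text \<open>The fibre product as a group (used for k >= 2), a subgroup of Q_(k-1) x H_k.\<close>
definition fibGrp where
  "fibGrp Q xi H dH p k = (Q (k-1) \<times>\<times> H k)\<lparr>carrier := fibC Q xi H dH p k\<rparr>"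

text \<open>u_k x = (xi_k x, p_k x); for k = 1, xi_1 is the map to the trivial group.\<close>
definition u_map :: "(nat \<Rightarrow> 'q monoid) \<Rightarrow> (nat \<Rightarrow> 'q \<Rightarrow> 'q) \<Rightarrow> (nat \<Rightarrow> 'q \<Rightarrow> 'h) \<Rightarrow> nat \<Rightarrow> 'q \<Rightarrow> 'q \<times> 'h" where
  "u_map Q xi p k x = (if k = 1 then \<one>\<^bsub>Q 1\<^esub> else xi k x, p k x)"

text \<open>The (semi)direct product Q_(n-1) |x (H_n x G_n); for n = 3, Q_2 acts on K_3 via
  nabla_1 o xi_2, for n >= 4 the product is direct.  Multiplication
  (a,k)(a',k') = (a a', k (a . k')).\<close>
definition sdp_act where
  "sdp_act n xi actH actG p f a = (\<lambda>(b, c). if n = 3 then (actH 3 (p 1 (xi 2 a)) b, actG 3 (f 1 (xi 2 a)) c)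
                                            else (b, c))"

definition sdp :: "nat \<Rightarrow> (nat \<Rightarrow> 'q monoid) \<Rightarrow> (nat \<Rightarrow> 'q \<Rightarrow> 'q)
     \<Rightarrow> (nat \<Rightarrow> 'h monoid) \<Rightarrow> (nat \<Rightarrow> 'h \<Rightarrow> 'h \<Rightarrow> 'h) \<Rightarrow> (nat \<Rightarrow> 'g monoid) \<Rightarrow> (nat \<Rightarrow> 'g \<Rightarrow> 'g \<Rightarrow> 'g)
     \<Rightarrow> (nat \<Rightarrow> 'q \<Rightarrow> 'h) \<Rightarrow> (nat \<Rightarrow> 'q \<Rightarrow> 'g) \<Rightarrow> ('q \<times> ('h \<times> 'g)) monoid" where
  "sdp n Q xi H actH G actG p f =
     \<lparr> carrier = carrier (Q (n-1)) \<times> (carrier (H n) \<times> carrier (G n)),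
       mult = (\<lambda>x y. (let w = sdp_act n xi actH actG p f (fst x) (snd y) in
                 (fst x \<otimes>\<^bsub>Q (n-1)\<^esub> fst y, fst (snd x) \<otimes>\<^bsub>H n\<^esub> fst w,
                  snd (snd x) \<otimes>\<^bsub>G n\<^esub> snd w))),
       one = (\<one>\<^bsub>Q (n-1)\<^esub>, \<one>\<^bsub>H n\<^esub>, \<one>\<^bsub>G n\<^esub>) \<rparr>"

definition sdpN where
  "sdpN n Q xi p f = (\<lambda>x. (inv\<^bsub>Q (n-1)\<^esub> (xi n x), p n x, f n x)) ` carrier (Q n)"

definition pushP where
  "pushP n Q xi H actH G actG p f = sdp n Q xi H actH G actG p f Mod sdpN n Q xi p f"

definition pclass where
  "pclass n Q xi H actH G actG p f a b c =
     sdpN n Q xi p f #>\<^bsub>sdp n Q xi H actH G actG p f\<^esub> (a, b, c)"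

end

theory Submission
  imports Defs
begin


definition gsdp :: "'a monoid \<Rightarrow> 'b monoid \<Rightarrow> 'c monoid \<Rightarrow> ('a\<Rightarrow>'b\<Rightarrow>'b) \<Rightarrow> ('a\<Rightarrow>'c\<Rightarrow>'c) \<Rightarrow> ('a\<times>'b\<times>'c) monoid" where
"gsdp A B C sB sC = \<lparr>carrier = carrier A \<times> carrier B \<times> carrier C,
   mult = (\<lambda>x y. (fst x \<otimes>\<^bsub>A\<^esub> fst y, fst (snd x) \<otimes>\<^bsub>B\<^esub> sB (fst x) (fst (snd y)),
                  snd (snd x) \<otimes>\<^bsub>C\<^esub> sC (fst x) (snd (snd y)))),
   one = (\<one>\<^bsub>A\<^esub>, \<one>\<^bsub>B\<^esub>, \<one>\<^bsub>C\<^esub>)\<rparr>"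

locale act_ctx =
  fixes A :: "'a monoid" and B :: "'b monoid" and s :: "'a \<Rightarrow> 'b \<Rightarrow> 'b"
  assumes A: "group A" and B: "group B"
    and s_closed: "\<And>a b. a \<in> carrier A \<Longrightarrow> b \<in> carrier B \<Longrightarrow> s a b \<in> carrier B"
    and s_one: "\<And>b. b \<in> carrier B \<Longrightarrow> s \<one>\<^bsub>A\<^esub> b = b"
    and s_mult: "\<And>a a' b. a \<in> carrier A \<Longrightarrow> a' \<in> carrier A \<Longrightarrow> b \<in> carrier B \<Longrightarrow> s (a \<otimes>\<^bsub>A\<^esub> a') b = s a (s a' b)"
    and s_hom: "\<And>a b b'. a \<in> carrier A \<Longrightarrow> b \<in> carrier B \<Longrightarrow> b' \<in> carrier B \<Longrightarrow> s a (b \<otimes>\<^bsub>B\<^esub> b') = s a b \<otimes>\<^bsub>B\<^esub> s a b'"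
begin
lemma s_unit: "a \<in> carrier A \<Longrightarrow> s a \<one>\<^bsub>B\<^esub> = \<one>\<^bsub>B\<^esub>"
proof -
  assume a: "a \<in> carrier A"
  have "s a \<one>\<^bsub>B\<^esub> \<otimes>\<^bsub>B\<^esub> s a \<one>\<^bsub>B\<^esub> = s a \<one>\<^bsub>B\<^esub>"
    using s_hom[OF a, of "\<one>\<^bsub>B\<^esub>" "\<one>\<^bsub>B\<^esub>"] B by (simp add: group.is_monoid)
  thus ?thesis using B a s_closed group.l_cancel_one'
    by (metis group.is_monoid monoid.one_closed monoid.r_one)
qed
lemma s_inv: "a \<in> carrier A \<Longrightarrow> b \<in> carrier B \<Longrightarrow> s a (inv\<^bsub>B\<^esub> b) = inv\<^bsub>B\<^esub> (s a b)"
  by (metis B group.inv_closed group.inv_equality group.l_inv s_closed s_hom s_unit)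
end

lemma gsdp_group:
  assumes AB: "act_ctx A B sB" and AC: "act_ctx A C sC"
  shows "group (gsdp A B C sB sC)"
proof -
  interpret B: act_ctx A B sB by fact
  interpret C: act_ctx A C sC by fact
  note gA = B.A and gB = B.B and gC = C.B
  show ?thesis
  proof (rule groupI)
    fix x y assume "x \<in> carrier (gsdp A B C sB sC)" "y \<in> carrier (gsdp A B C sB sC)"
    thus "x \<otimes>\<^bsub>gsdp A B C sB sC\<^esub> y \<in> carrier (gsdp A B C sB sC)"
      using gA gB gC B.s_closed C.s_closed
      by (auto simp: gsdp_def group.is_monoid monoid.m_closed)
  next
    show "\<one>\<^bsub>gsdp A B C sB sC\<^esub> \<in> carrier (gsdp A B C sB sC)"
      using gA gB gC by (simp add: gsdp_def monoid.one_closed group.is_monoid)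
  next
    fix x y z assume "x \<in> carrier (gsdp A B C sB sC)" "y \<in> carrier (gsdp A B C sB sC)"
      "z \<in> carrier (gsdp A B C sB sC)"
    thus "x \<otimes>\<^bsub>gsdp A B C sB sC\<^esub> y \<otimes>\<^bsub>gsdp A B C sB sC\<^esub> z = x \<otimes>\<^bsub>gsdp A B C sB sC\<^esub> (y \<otimes>\<^bsub>gsdp A B C sB sC\<^esub> z)"
      using gA gB gC B.s_closed C.s_closed B.s_mult C.s_mult B.s_hom C.s_hom
      by (auto simp: gsdp_def group.is_monoid monoid.m_closed monoid.m_assoc)
  next
    fix x assume "x \<in> carrier (gsdp A B C sB sC)"
    thus "\<one>\<^bsub>gsdp A B C sB sC\<^esub> \<otimes>\<^bsub>gsdp A B C sB sC\<^esub> x = x"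
      using gA gB gC B.s_one C.s_one
      by (auto simp: gsdp_def group.is_monoid monoid.l_one)
  next
    fix x assume x: "x \<in> carrier (gsdp A B C sB sC)"
    then obtain a b c where xe: "x = (a,b,c)" and a: "a \<in> carrier A" and b: "b \<in> carrier B" and c: "c \<in> carrier C"
      by (auto simp: gsdp_def)
    let ?y = "(inv\<^bsub>A\<^esub> a, sB (inv\<^bsub>A\<^esub> a) (inv\<^bsub>B\<^esub> b), sC (inv\<^bsub>A\<^esub> a) (inv\<^bsub>C\<^esub> c))"
    have "?y \<in> carrier (gsdp A B C sB sC)"
      using gA gB gC a b c B.s_closed C.s_closed by (simp add: gsdp_def)
    moreover have "?y \<otimes>\<^bsub>gsdp A B C sB sC\<^esub> x = \<one>\<^bsub>gsdp A B C sB sC\<^esub>"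
      using gA gB gC a b c B.s_closed C.s_closed B.s_hom[symmetric] C.s_hom[symmetric] B.s_unit C.s_unit
      by (simp add: gsdp_def xe group.l_inv group.inv_closed)
    ultimately show "\<exists>y\<in>carrier (gsdp A B C sB sC). y \<otimes>\<^bsub>gsdp A B C sB sC\<^esub> x = \<one>\<^bsub>gsdp A B C sB sC\<^esub>" by blast
  qed
qed

lemma gsdp_inv:
  assumes AB: "act_ctx A B sB" and AC: "act_ctx A C sC"
    and a: "a \<in> carrier A" and b: "b \<in> carrier B" and c: "c \<in> carrier C"
  shows "inv\<^bsub>gsdp A B C sB sC\<^esub> (a,b,c) = (inv\<^bsub>A\<^esub> a, sB (inv\<^bsub>A\<^esub> a) (inv\<^bsub>B\<^esub> b), sC (inv\<^bsub>A\<^esub> a) (inv\<^bsub>C\<^esub> c))"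
proof -
  interpret B: act_ctx A B sB by fact
  interpret C: act_ctx A C sC by fact
  note gA = B.A and gB = B.B and gC = C.B
  show ?thesis
  proof (rule group.inv_equality[OF gsdp_group[OF AB AC]])
    show "(inv\<^bsub>A\<^esub> a, sB (inv\<^bsub>A\<^esub> a) (inv\<^bsub>B\<^esub> b), sC (inv\<^bsub>A\<^esub> a) (inv\<^bsub>C\<^esub> c)) \<otimes>\<^bsub>gsdp A B C sB sC\<^esub> (a, b, c) = \<one>\<^bsub>gsdp A B C sB sC\<^esub>"
      using gA gB gC a b c B.s_closed C.s_closed B.s_hom[symmetric] C.s_hom[symmetric] B.s_unit C.s_unit
      by (simp add: gsdp_def group.l_inv group.inv_closed)
  qed (use gA gB gC a b c B.s_closed C.s_closed in \<open>auto simp: gsdp_def\<close>)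
qed



lemma ghom: "group A \<Longrightarrow> group B \<Longrightarrow> h \<in> hom A B \<Longrightarrow> group_hom A B h"
  by (simp add: group_hom.intro group_hom_axioms.intro)

locale mt3 =
  fixes n :: nat
    and Q :: "nat \<Rightarrow> 'q monoid" and xi :: "nat \<Rightarrow> 'q \<Rightarrow> 'q" and actQ :: "nat \<Rightarrow> 'q \<Rightarrow> 'q \<Rightarrow> 'q"
    and H :: "nat \<Rightarrow> 'h monoid" and dH :: "nat \<Rightarrow> 'h \<Rightarrow> 'h" and actH :: "nat \<Rightarrow> 'h \<Rightarrow> 'h \<Rightarrow> 'h"
    and G :: "nat \<Rightarrow> 'g monoid" and dG :: "nat \<Rightarrow> 'g \<Rightarrow> 'g" and actG :: "nat \<Rightarrow> 'g \<Rightarrow> 'g \<Rightarrow> 'g"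
    and p :: "nat \<Rightarrow> 'q \<Rightarrow> 'h" and f :: "nat \<Rightarrow> 'q \<Rightarrow> 'g"
  assumes n3: "n \<ge> 3"
    and p_tf: "ncc_trivial_fibration n Q xi actQ H dH actH p"
    and f_mor: "ncc_morphism n Q xi actQ G dG actG f"
begin

lemma pmor: "ncc_morphism n Q xi actQ H dH actH p"
  using p_tf by (simp add: ncc_trivial_fibration_def ncc_fibration_def)
lemma rQ: "reduced_ncc n Q xi actQ" using pmor by (simp add: ncc_morphism_def)
lemma rH: "reduced_ncc n H dH actH" using pmor by (simp add: ncc_morphism_def)
lemma rG: "reduced_ncc n G dG actG" using f_mor by (simp add: ncc_morphism_def)

lemma gQ: "1 \<le> k \<Longrightarrow> k \<le> n \<Longrightarrow> group (Q k)" using rQ by (simp add: reduced_ncc_def)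
lemma gH: "1 \<le> k \<Longrightarrow> k \<le> n \<Longrightarrow> group (H k)" using rH by (simp add: reduced_ncc_def)
lemma gG: "1 \<le> k \<Longrightarrow> k \<le> n \<Longrightarrow> group (G k)" using rG by (simp add: reduced_ncc_def)
lemma cQ: "3 \<le> k \<Longrightarrow> k \<le> n \<Longrightarrow> comm_group (Q k)" using rQ by (simp add: reduced_ncc_def)
lemma cH: "3 \<le> k \<Longrightarrow> k \<le> n \<Longrightarrow> comm_group (H k)" using rH by (simp add: reduced_ncc_def)
lemma cG: "3 \<le> k \<Longrightarrow> k \<le> n \<Longrightarrow> comm_group (G k)" using rG by (simp add: reduced_ncc_def)
lemma xi_hom: "2 \<le> k \<Longrightarrow> k \<le> n \<Longrightarrow> group_hom (Q k) (Q (k-1)) (xi k)"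
  using rQ by (intro ghom gQ) (auto simp: reduced_ncc_def)
lemma dH_hom: "2 \<le> k \<Longrightarrow> k \<le> n \<Longrightarrow> group_hom (H k) (H (k-1)) (dH k)"
  using rH by (intro ghom gH) (auto simp: reduced_ncc_def)
lemma p_hom: "1 \<le> k \<Longrightarrow> k \<le> n \<Longrightarrow> group_hom (Q k) (H k) (p k)"
  using pmor by (intro ghom gQ gH) (auto simp: ncc_morphism_def)
lemma f_hom: "1 \<le> k \<Longrightarrow> k \<le> n \<Longrightarrow> group_hom (Q k) (G k) (f k)"
  using f_mor by (intro ghom gQ gG) (auto simp: ncc_morphism_def)
lemma p_comm: "2 \<le> k \<Longrightarrow> k \<le> n \<Longrightarrow> x \<in> carrier (Q k) \<Longrightarrow> p (k-1) (xi k x) = dH k (p k x)"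
  using pmor by (auto simp: ncc_morphism_def)
lemma p_surj: "1 \<le> k \<Longrightarrow> k \<le> n \<Longrightarrow> p k ` carrier (Q k) = carrier (H k)"
  using p_tf by (auto simp: ncc_trivial_fibration_def ncc_fibration_def)
lemma p_iso: "1 \<le> k \<Longrightarrow> k \<le> n \<Longrightarrow> pi_map n H dH p k \<in> iso (pi_grp n Q xi k) (pi_grp n H dH k)"
  using p_tf by (auto simp: ncc_trivial_fibration_def ncc_weak_equivalence_def)
lemma xixi: "3 \<le> k \<Longrightarrow> k \<le> n \<Longrightarrow> x \<in> carrier (Q k) \<Longrightarrow> xi (k-1) (xi k x) = \<one>\<^bsub>Q (k-2)\<^esub>"
  using rQ by (auto simp: reduced_ncc_def)
lemma dHdH: "3 \<le> k \<Longrightarrow> k \<le> n \<Longrightarrow> x \<in> carrier (H k) \<Longrightarrow> dH (k-1) (dH k x) = \<one>\<^bsub>H (k-2)\<^esub>"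
  using rH by (auto simp: reduced_ncc_def)

end


lemma r_coset_upd: "r_coset (M\<lparr>carrier := K\<rparr>) = r_coset M"
  by (simp add: r_coset_def fun_eq_iff)

lemma rn_group: "reduced_ncc n C d act \<Longrightarrow> 1 \<le> k \<Longrightarrow> k \<le> n \<Longrightarrow> group (C k)"
  by (simp add: reduced_ncc_def)
lemma rn_dhom': "reduced_ncc n C d act \<Longrightarrow> 2 \<le> k \<Longrightarrow> k \<le> n \<Longrightarrow> d k \<in> hom (C k) (C (k-1))"
  unfolding reduced_ncc_def by (simp del: One_nat_def)
lemma rn_dhom: "reduced_ncc n C d act \<Longrightarrow> 2 \<le> k \<Longrightarrow> k \<le> n \<Longrightarrow> group_hom (C k) (C (k-1)) (d k)"
  by (rule ghom[OF rn_group rn_group rn_dhom']) auto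

lemma im_sub: assumes r: "reduced_ncc n C d act" and k: "1 \<le> k" "k \<le> n"
  shows "subgroup (imC n C d k) (C k)"
proof (cases "k = n")
  case True thus ?thesis using group.triv_subgroup[OF rn_group[OF r k]] by (simp add: imC_def)
next
  case False
  then have "group_hom (C (Suc k)) (C k) (d (Suc k))" using rn_dhom[OF r, of "Suc k"] k by simp
  then show ?thesis using False by (simp add: imC_def group_hom.img_is_subgroup)
qed

lemma ker_carr: "1 \<le> k \<Longrightarrow> kerC C d k \<subseteq> carrier (C k)"
  by (auto simp: kerC_def)

lemma one_ker: assumes r: "reduced_ncc n C d act" and k: "1 \<le> k" "k \<le> n"
  shows "\<one>\<^bsub>C k\<^esub> \<in> kerC C d k"
proof -
  have g: "group (C k)" using rn_group[OF r k] .
  show ?thesis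
  proof (cases "k = 1")
    case True thus ?thesis using g by (simp add: kerC_def monoid.one_closed group.is_monoid)
  next
    case False
    then have "group_hom (C k) (C (k-1)) (d k)" using rn_dhom[OF r, of k] k by simp
    thus ?thesis using False k g by (simp add: kerC_def group_hom.hom_one monoid.one_closed group.is_monoid)
  qed
qed

lemma pi_carrier: "carrier (pi_grp n C d k) = (\<lambda>x. imC n C d k #>\<^bsub>C k\<^esub> x) ` kerC C d k"
  by (auto simp: pi_grp_def FactGroup_def RCOSETS_def r_coset_upd)


lemma mor_rC: "ncc_morphism n C d act D e act' F \<Longrightarrow> reduced_ncc n C d act" by (simp add: ncc_morphism_def)
lemma mor_rD: "ncc_morphism n C d act D e act' F \<Longrightarrow> reduced_ncc n D e act'" by (simp add: ncc_morphism_def)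
lemma mor_hom': "ncc_morphism n C d act D e act' F \<Longrightarrow> 1 \<le> k \<Longrightarrow> k \<le> n \<Longrightarrow> F k \<in> hom (C k) (D k)"
  unfolding ncc_morphism_def by (simp del: One_nat_def)
lemma mor_hom: "ncc_morphism n C d act D e act' F \<Longrightarrow> 1 \<le> k \<Longrightarrow> k \<le> n \<Longrightarrow> group_hom (C k) (D k) (F k)"
  by (rule ghom[OF rn_group[OF mor_rC] rn_group[OF mor_rD] mor_hom']) auto
lemma mor_comm: "ncc_morphism n C d act D e act' F \<Longrightarrow> 2 \<le> k \<Longrightarrow> k \<le> n \<Longrightarrow> x \<in> carrier (C k) \<Longrightarrow> F (k-1) (d k x) = e k (F k x)"
  unfolding ncc_morphism_def by (simp del: One_nat_def)

lemma pi_map_rep: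
  assumes m: "ncc_morphism n C d act D e act' F" and k: "1 \<le> k" "k \<le> n"
    and x: "x \<in> kerC C d k"
  shows "pi_map n D e F k (imC n C d k #>\<^bsub>C k\<^esub> x) = imC n D e k #>\<^bsub>D k\<^esub> F k x"
proof -
  have rC: "reduced_ncc n C d act" and rD: "reduced_ncc n D e act'" using mor_rC[OF m] mor_rD[OF m] .
  have gC: "group (C k)" and gD: "group (D k)" using rn_group[OF rC k] rn_group[OF rD k] .
  have Fh: "group_hom (C k) (D k) (F k)" using mor_hom[OF m k] .
  have xc: "x \<in> carrier (C k)" using ker_carr[OF k(1)] x by (rule subsetD)
  have sC: "subgroup (imC n C d k) (C k)" using im_sub[OF rC k] .
  have sD: "subgroup (imC n D e k) (D k)" using im_sub[OF rD k] .
  have "x \<in> imC n C d k #>\<^bsub>C k\<^esub> x" using group.rcos_self[OF gC xc sC] .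
  hence "(SOME y. y \<in> imC n C d k #>\<^bsub>C k\<^esub> x) \<in> imC n C d k #>\<^bsub>C k\<^esub> x" by (rule someI)
  then obtain m where mm: "m \<in> imC n C d k" and eq: "(SOME y. y \<in> imC n C d k #>\<^bsub>C k\<^esub> x) = m \<otimes>\<^bsub>C k\<^esub> x"
    unfolding r_coset_def by blast
  have mc: "m \<in> carrier (C k)" using subgroup.mem_carrier[OF sC mm] .
  have Fm: "F k m \<in> imC n D e k"
  proof (cases "k = n")
    case True
    hence "m = \<one>\<^bsub>C k\<^esub>" using mm by (simp add: imC_def)
    hence "F k m = \<one>\<^bsub>D k\<^esub>" using group_hom.hom_one[OF Fh] by simp
    thus ?thesis using True by (simp add: imC_def)
  next
    case False
    then obtain z where z: "z \<in> carrier (C (Suc k))" "m = d (Suc k) z" using mm by (auto simp: imC_def)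
    have "F (Suc k - 1) (d (Suc k) z) = e (Suc k) (F (Suc k) z)" using mor_comm[OF m, of "Suc k"] m z k False by simp
    moreover have "F (Suc k) z \<in> carrier (D (Suc k))" using mor_hom[OF m, of "Suc k"] z k False group_hom.hom_closed by fastforce
    ultimately show ?thesis using False z by (auto simp: imC_def)
  qed
  have "F k (m \<otimes>\<^bsub>C k\<^esub> x) = F k m \<otimes>\<^bsub>D k\<^esub> F k x" using group_hom.hom_mult[OF Fh mc xc] .
  moreover have "imC n D e k #>\<^bsub>D k\<^esub> (F k m \<otimes>\<^bsub>D k\<^esub> F k x) = imC n D e k #>\<^bsub>D k\<^esub> F k x"
  proof -
    have Fxc: "F k x \<in> carrier (D k)" using group_hom.hom_closed[OF Fh xc] .
    have Fmc: "F k m \<in> carrier (D k)" using group_hom.hom_closed[OF Fh mc] .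
    have "imC n D e k #>\<^bsub>D k\<^esub> (F k m \<otimes>\<^bsub>D k\<^esub> F k x) = (imC n D e k #>\<^bsub>D k\<^esub> F k m) #>\<^bsub>D k\<^esub> F k x"
      using group.coset_mult_assoc[OF gD subgroup.subset[OF sD] Fmc Fxc] by simp
    also have "imC n D e k #>\<^bsub>D k\<^esub> F k m = imC n D e k" using group.coset_join2[OF gD Fmc sD Fm] .
    finally show ?thesis .
  qed
  ultimately show ?thesis unfolding pi_map_def eq by simp
qed

lemma pi_inj:
  assumes m: "ncc_morphism n C d act D e act' F" and k: "1 \<le> k" "k \<le> n"
    and iso: "pi_map n D e F k \<in> iso (pi_grp n C d k) (pi_grp n D e k)"
    and x: "x \<in> kerC C d k" and Fx: "F k x \<in> imC n D e k"
  shows "x \<in> imC n C d k"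
proof -
  have rC: "reduced_ncc n C d act" and rD: "reduced_ncc n D e act'" using mor_rC[OF m] mor_rD[OF m] .
  have gC: "group (C k)" and gD: "group (D k)" using rn_group[OF rC k] rn_group[OF rD k] .
  have Fh: "group_hom (C k) (D k) (F k)" using mor_hom[OF m k] .
  have xc: "x \<in> carrier (C k)" using ker_carr[OF k(1)] x by (rule subsetD)
  have sC: "subgroup (imC n C d k) (C k)" using im_sub[OF rC k] .
  have sD: "subgroup (imC n D e k) (D k)" using im_sub[OF rD k] .
  have o: "\<one>\<^bsub>C k\<^esub> \<in> kerC C d k" using one_ker[OF rC k] .
  have inj: "inj_on (pi_map n D e F k) (carrier (pi_grp n C d k))" using iso by (auto simp: iso_def bij_betw_def)
  have "pi_map n D e F k (imC n C d k #>\<^bsub>C k\<^esub> x) = pi_map n D e F k (imC n C d k #>\<^bsub>C k\<^esub> \<one>\<^bsub>C k\<^esub>)"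
  proof -
    have Fxc: "F k x \<in> carrier (D k)" using group_hom.hom_closed[OF Fh xc] .
    have "imC n D e k #>\<^bsub>D k\<^esub> F k x = imC n D e k" using group.coset_join2[OF gD Fxc sD Fx] .
    moreover have "imC n D e k #>\<^bsub>D k\<^esub> F k \<one>\<^bsub>C k\<^esub> = imC n D e k"
      using group_hom.hom_one[OF Fh] group.coset_mult_one[OF gD subgroup.subset[OF sD]] by simp
    ultimately show ?thesis using pi_map_rep[OF m k x] pi_map_rep[OF m k o] by simp
  qed
  moreover have "imC n C d k #>\<^bsub>C k\<^esub> x \<in> carrier (pi_grp n C d k)" using x by (simp add: pi_carrier)
  moreover have "imC n C d k #>\<^bsub>C k\<^esub> \<one>\<^bsub>C k\<^esub> \<in> carrier (pi_grp n C d k)" using o by (simp add: pi_carrier)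
  ultimately have "imC n C d k #>\<^bsub>C k\<^esub> x = imC n C d k #>\<^bsub>C k\<^esub> \<one>\<^bsub>C k\<^esub>"
    using inj by (simp add: inj_on_def)
  hence "imC n C d k #>\<^bsub>C k\<^esub> x = imC n C d k" using group.coset_mult_one[OF gC] subgroup.subset[OF sC] by simp
  thus ?thesis using group.rcos_self[OF gC xc sC] by simp
qed

lemma pi_surj:
  assumes m: "ncc_morphism n C d act D e act' F" and k: "1 \<le> k" "k \<le> n"
    and iso: "pi_map n D e F k \<in> iso (pi_grp n C d k) (pi_grp n D e k)"
    and h: "h \<in> kerC D e k"
  shows "\<exists>x\<in>kerC C d k. \<exists>m\<in>imC n D e k. h = m \<otimes>\<^bsub>D k\<^esub> F k x"
proof -
  have rC: "reduced_ncc n C d act" and rD: "reduced_ncc n D e act'" using mor_rC[OF m] mor_rD[OF m] .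
  have gC: "group (C k)" and gD: "group (D k)" using rn_group[OF rC k] rn_group[OF rD k] .
  have hc: "h \<in> carrier (D k)" using ker_carr[OF k(1)] h by (rule subsetD)
  have sD: "subgroup (imC n D e k) (D k)" using im_sub[OF rD k] .
  have "pi_map n D e F k ` carrier (pi_grp n C d k) = carrier (pi_grp n D e k)"
    using iso by (auto simp: iso_def bij_betw_def)
  moreover have "imC n D e k #>\<^bsub>D k\<^esub> h \<in> carrier (pi_grp n D e k)" using h by (simp add: pi_carrier)
  ultimately obtain X where X: "X \<in> carrier (pi_grp n C d k)" and XX: "pi_map n D e F k X = imC n D e k #>\<^bsub>D k\<^esub> h"
    by (metis imageE)
  then obtain x where x: "x \<in> kerC C d k" and Xe: "X = imC n C d k #>\<^bsub>C k\<^esub> x" by (auto simp: pi_carrier)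
  have eq: "imC n D e k #>\<^bsub>D k\<^esub> h = imC n D e k #>\<^bsub>D k\<^esub> F k x"
    using XX pi_map_rep[OF m k x] Xe by simp
  have "h \<in> imC n D e k #>\<^bsub>D k\<^esub> F k x" using eq group.rcos_self[OF gD hc sD] by simp
  thus ?thesis using x by (auto simp: r_coset_def)
qed



context fixes n :: nat and C :: "nat \<Rightarrow> 'a monoid" and d and act assumes r: "reduced_ncc n C d act"
begin
lemma rn_act_closed: "2 \<le> k \<Longrightarrow> k \<le> n \<Longrightarrow> g \<in> carrier (C 1) \<Longrightarrow> x \<in> carrier (C k) \<Longrightarrow> act k g x \<in> carrier (C k)"
  using r unfolding reduced_ncc_def by (simp del: One_nat_def)
lemma rn_act_one: "2 \<le> k \<Longrightarrow> k \<le> n \<Longrightarrow> x \<in> carrier (C k) \<Longrightarrow> act k \<one>\<^bsub>C 1\<^esub> x = x"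
  using r unfolding reduced_ncc_def by (simp del: One_nat_def)
lemma rn_act_mult: "2 \<le> k \<Longrightarrow> k \<le> n \<Longrightarrow> g \<in> carrier (C 1) \<Longrightarrow> h \<in> carrier (C 1) \<Longrightarrow> x \<in> carrier (C k) \<Longrightarrow> act k (g \<otimes>\<^bsub>C 1\<^esub> h) x = act k g (act k h x)"
  using r unfolding reduced_ncc_def by (simp del: One_nat_def)
lemma rn_act_hom: "2 \<le> k \<Longrightarrow> k \<le> n \<Longrightarrow> g \<in> carrier (C 1) \<Longrightarrow> x \<in> carrier (C k) \<Longrightarrow> y \<in> carrier (C k) \<Longrightarrow> act k g (x \<otimes>\<^bsub>C k\<^esub> y) = act k g x \<otimes>\<^bsub>C k\<^esub> act k g y"
  using r unfolding reduced_ncc_def by (simp del: One_nat_def)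
lemma rn_cm1: "g \<in> carrier (C 1) \<Longrightarrow> x \<in> carrier (C 2) \<Longrightarrow> d 2 (act 2 g x) = g \<otimes>\<^bsub>C 1\<^esub> d 2 x \<otimes>\<^bsub>C 1\<^esub> inv\<^bsub>C 1\<^esub> g"
  using r unfolding reduced_ncc_def by (simp del: One_nat_def)
lemma rn_cm2: "x \<in> carrier (C 2) \<Longrightarrow> y \<in> carrier (C 2) \<Longrightarrow> act 2 (d 2 x) y = x \<otimes>\<^bsub>C 2\<^esub> y \<otimes>\<^bsub>C 2\<^esub> inv\<^bsub>C 2\<^esub> x"
  using r unfolding reduced_ncc_def by (simp del: One_nat_def)
lemma rn_equiv: "3 \<le> k \<Longrightarrow> k \<le> n \<Longrightarrow> g \<in> carrier (C 1) \<Longrightarrow> x \<in> carrier (C k) \<Longrightarrow> d k (act k g x) = act (k-1) g (d k x)"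
  using r unfolding reduced_ncc_def by (simp del: One_nat_def)
lemma rn_dd: "3 \<le> k \<Longrightarrow> k \<le> n \<Longrightarrow> x \<in> carrier (C k) \<Longrightarrow> d (k-1) (d k x) = \<one>\<^bsub>C (k-2)\<^esub>"
  using r unfolding reduced_ncc_def by (simp del: One_nat_def)
end

lemma mor_act: "ncc_morphism n C d act D e act' F \<Longrightarrow> 2 \<le> k \<Longrightarrow> k \<le> n \<Longrightarrow> g \<in> carrier (C 1) \<Longrightarrow> x \<in> carrier (C k) \<Longrightarrow> F k (act k g x) = act' k (F 1 g) (F k x)"
  unfolding ncc_morphism_def by (simp del: One_nat_def)

lemma ker2_central:
  assumes r: "reduced_ncc n C d act" and n: "2 \<le> n" and y: "y \<in> carrier (C 2)" and dy: "d 2 y = \<one>\<^bsub>C 1\<^esub>"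
    and z: "z \<in> carrier (C 2)"
  shows "y \<otimes>\<^bsub>C 2\<^esub> z = z \<otimes>\<^bsub>C 2\<^esub> y"
proof -
  have g: "group (C 2)" using rn_group[OF r, of 2] n by simp
  have "z = y \<otimes>\<^bsub>C 2\<^esub> z \<otimes>\<^bsub>C 2\<^esub> inv\<^bsub>C 2\<^esub> y"
    using rn_cm2[OF r y z] rn_act_one[OF r, of 2 z] n z dy by simp
  hence "z \<otimes>\<^bsub>C 2\<^esub> y = y \<otimes>\<^bsub>C 2\<^esub> z \<otimes>\<^bsub>C 2\<^esub> inv\<^bsub>C 2\<^esub> y \<otimes>\<^bsub>C 2\<^esub> y" by simp
  also have "\<dots> = y \<otimes>\<^bsub>C 2\<^esub> z"
  proof -
    interpret G2: group "C 2" by (rule g)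
    show ?thesis using y z by (simp add: G2.m_assoc)
  qed
  finally show ?thesis by simp
qed



lemma gsdp_conj:
  assumes AB: "act_ctx A B sB" and AC: "act_ctx A C sC" and cB: "comm_group B" and cC: "comm_group C"
    and a: "a \<in> carrier A" and b: "b \<in> carrier B" and c: "c \<in> carrier C"
    and m: "m \<in> carrier A" and u: "u \<in> carrier B" and v: "v \<in> carrier C"
    and tB: "\<And>z. z \<in> carrier B \<Longrightarrow> sB (a \<otimes>\<^bsub>A\<^esub> m \<otimes>\<^bsub>A\<^esub> inv\<^bsub>A\<^esub> a) z = z"
    and tC: "\<And>z. z \<in> carrier C \<Longrightarrow> sC (a \<otimes>\<^bsub>A\<^esub> m \<otimes>\<^bsub>A\<^esub> inv\<^bsub>A\<^esub> a) z = z"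
  shows "(a,b,c) \<otimes>\<^bsub>gsdp A B C sB sC\<^esub> (m,u,v) \<otimes>\<^bsub>gsdp A B C sB sC\<^esub> inv\<^bsub>gsdp A B C sB sC\<^esub> (a,b,c)
         = (a \<otimes>\<^bsub>A\<^esub> m \<otimes>\<^bsub>A\<^esub> inv\<^bsub>A\<^esub> a, sB a u, sC a v)"
proof -
  interpret X: act_ctx A B sB by fact
  interpret Y: act_ctx A C sC by fact
  interpret A: group A by (rule X.A)
  interpret B: comm_group B by (rule cB)
  interpret C: comm_group C by (rule cC)
  have ia: "inv\<^bsub>A\<^esub> a \<in> carrier A" using a by simp
  have e1: "sB (a \<otimes>\<^bsub>A\<^esub> m) (sB (inv\<^bsub>A\<^esub> a) (inv\<^bsub>B\<^esub> b)) = inv\<^bsub>B\<^esub> b"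
    using X.s_mult[of "a \<otimes>\<^bsub>A\<^esub> m" "inv\<^bsub>A\<^esub> a" "inv\<^bsub>B\<^esub> b", symmetric] tB[of "inv\<^bsub>B\<^esub> b"] a m b by simp
  have e2: "sC (a \<otimes>\<^bsub>A\<^esub> m) (sC (inv\<^bsub>A\<^esub> a) (inv\<^bsub>C\<^esub> c)) = inv\<^bsub>C\<^esub> c"
    using Y.s_mult[of "a \<otimes>\<^bsub>A\<^esub> m" "inv\<^bsub>A\<^esub> a" "inv\<^bsub>C\<^esub> c", symmetric] tC[of "inv\<^bsub>C\<^esub> c"] a m c by simp
  have "b \<otimes>\<^bsub>B\<^esub> sB a u \<otimes>\<^bsub>B\<^esub> inv\<^bsub>B\<^esub> b = sB a u"
    using X.s_closed[OF a u] b by (metis B.inv_closed B.m_assoc B.m_comm B.r_inv B.r_one)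
  moreover have "c \<otimes>\<^bsub>C\<^esub> sC a v \<otimes>\<^bsub>C\<^esub> inv\<^bsub>C\<^esub> c = sC a v"
    using Y.s_closed[OF a v] c by (metis C.inv_closed C.m_assoc C.m_comm C.r_inv C.r_one)
  ultimately show ?thesis
    using gsdp_inv[OF AB AC a b c] e1 e2 by (simp add: gsdp_def)
qed

lemma act_ctx_triv: "group A \<Longrightarrow> group B \<Longrightarrow> act_ctx A B (\<lambda>a b. b)"
  by (simp add: act_ctx_def)

lemma act_ctx_via:
  assumes A: "group A" and r: "reduced_ncc n C d act" and k: "2 \<le> k" "k \<le> n"
    and tc: "\<And>a. a \<in> carrier A \<Longrightarrow> \<theta> a \<in> carrier (C 1)"
    and t1: "\<theta> \<one>\<^bsub>A\<^esub> = \<one>\<^bsub>C 1\<^esub>"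
    and tm: "\<And>a a'. a \<in> carrier A \<Longrightarrow> a' \<in> carrier A \<Longrightarrow> \<theta> (a \<otimes>\<^bsub>A\<^esub> a') = \<theta> a \<otimes>\<^bsub>C 1\<^esub> \<theta> a'"
  shows "act_ctx A (C k) (\<lambda>a b. act k (\<theta> a) b)"
  unfolding act_ctx_def using A rn_group[OF r, of k] k
    rn_act_closed[OF r] rn_act_one[OF r] rn_act_mult[OF r] rn_act_hom[OF r] tc t1 tm
  by auto

context mt3 begin

definition "sH a b = (if n = 3 then actH 3 (p 1 (xi 2 a)) b else b)"
definition "sG a c = (if n = 3 then actG 3 (f 1 (xi 2 a)) c else c)"
definition "S = gsdp (Q (n-1)) (H n) (G n) sH sG"

lemma sdp_eq: "sdp n Q xi H actH G actG p f = S"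
  by (simp add: sdp_def gsdp_def sdp_act_def sH_def sG_def S_def split_beta Let_def fun_eq_iff if_distrib)

lemma gQn1: "group (Q (n-1))" using gQ n3 by simp
lemma gQn2: "group (Q (n-2))" using gQ n3 by simp
lemma gQn: "group (Q n)" using gQ n3 by simp
lemma gHn: "group (H n)" using gH n3 by simp
lemma gHn1: "group (H (n-1))" using gH n3 by simp
lemma gGn: "group (G n)" using gG n3 by simp
lemma cQn: "comm_group (Q n)" using cQ n3 by simp
lemma cHn: "comm_group (H n)" using cH n3 by simp
lemma cGn: "comm_group (G n)" using cG n3 by simp

lemma xi2h: "group_hom (Q 2) (Q 1) (xi 2)" using xi_hom[of 2] n3 by simp
lemma p1h: "group_hom (Q 1) (H 1) (p 1)" using p_hom[of 1] n3 by simp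
lemma f1h: "group_hom (Q 1) (G 1) (f 1)" using f_hom[of 1] n3 by simp

lemma actS_H: "act_ctx (Q (n-1)) (H n) sH"
proof (cases "n = 3")
  case True
  have "act_ctx (Q 2) (H 3) (\<lambda>a b. actH 3 ((\<lambda>a. p 1 (xi 2 a)) a) b)"
  proof (rule act_ctx_via[OF _ rH])
    show "group (Q 2)" using gQ[of 2] True by simp
    show "2 \<le> (3::nat)" "3 \<le> n" using True by auto
    show "\<And>a. a \<in> carrier (Q 2) \<Longrightarrow> p 1 (xi 2 a) \<in> carrier (H 1)"
      using group_hom.hom_closed[OF xi2h] group_hom.hom_closed[OF p1h] by blast
    show "p 1 (xi 2 \<one>\<^bsub>Q 2\<^esub>) = \<one>\<^bsub>H 1\<^esub>"
      using group_hom.hom_one[OF xi2h] group_hom.hom_one[OF p1h] by simp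
    show "\<And>a a'. a \<in> carrier (Q 2) \<Longrightarrow> a' \<in> carrier (Q 2) \<Longrightarrow> p 1 (xi 2 (a \<otimes>\<^bsub>Q 2\<^esub> a')) = p 1 (xi 2 a) \<otimes>\<^bsub>H 1\<^esub> p 1 (xi 2 a')"
      using group_hom.hom_closed[OF xi2h] group_hom.hom_mult[OF xi2h] group_hom.hom_mult[OF p1h] by simp
  qed
  moreover have "sH = (\<lambda>a b. actH 3 ((\<lambda>a. p 1 (xi 2 a)) a) b)"
    unfolding sH_def using True by (intro ext) simp
  moreover have "Q (n-1) = Q 2" "H n = H 3" using True by simp_all
  ultimately show ?thesis by (simp only:)
next
  case False
  thus ?thesis using act_ctx_triv[OF gQn1 gHn] by (simp add: sH_def[abs_def])
qed

lemma actS_G: "act_ctx (Q (n-1)) (G n) sG"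
proof (cases "n = 3")
  case True
  have "act_ctx (Q 2) (G 3) (\<lambda>a b. actG 3 ((\<lambda>a. f 1 (xi 2 a)) a) b)"
  proof (rule act_ctx_via[OF _ rG])
    show "group (Q 2)" using gQ[of 2] True by simp
    show "2 \<le> (3::nat)" "3 \<le> n" using True by auto
    show "\<And>a. a \<in> carrier (Q 2) \<Longrightarrow> f 1 (xi 2 a) \<in> carrier (G 1)"
      using group_hom.hom_closed[OF xi2h] group_hom.hom_closed[OF f1h] by blast
    show "f 1 (xi 2 \<one>\<^bsub>Q 2\<^esub>) = \<one>\<^bsub>G 1\<^esub>"
      using group_hom.hom_one[OF xi2h] group_hom.hom_one[OF f1h] by simp
    show "\<And>a a'. a \<in> carrier (Q 2) \<Longrightarrow> a' \<in> carrier (Q 2) \<Longrightarrow> f 1 (xi 2 (a \<otimes>\<^bsub>Q 2\<^esub> a')) = f 1 (xi 2 a) \<otimes>\<^bsub>G 1\<^esub> f 1 (xi 2 a')"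
      using group_hom.hom_closed[OF xi2h] group_hom.hom_mult[OF xi2h] group_hom.hom_mult[OF f1h] by simp
  qed
  moreover have "sG = (\<lambda>a b. actG 3 ((\<lambda>a. f 1 (xi 2 a)) a) b)"
    unfolding sG_def using True by (intro ext) simp
  moreover have "Q (n-1) = Q 2" "G n = G 3" using True by simp_all
  ultimately show ?thesis by (simp only:)
next
  case False
  thus ?thesis using act_ctx_triv[OF gQn1 gGn] by (simp add: sG_def[abs_def])
qed

lemma gS: "group S" unfolding S_def by (rule gsdp_group[OF actS_H actS_G])

end


context mt3 begin

definition "nu x = (inv\<^bsub>Q (n-1)\<^esub> (xi n x), p n x, f n x)"
lemma N_eq: "sdpN n Q xi p f = nu ` carrier (Q n)" by (simp add: sdpN_def nu_def[abs_def])

lemma xin: "group_hom (Q n) (Q (n-1)) (xi n)" using xi_hom[of n] n3 by simp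
lemma xin1: "group_hom (Q (n-1)) (Q (n-2)) (xi (n-1))" using xi_hom[of "n-1"] n3 by (simp add: numeral_2_eq_2)
lemma pn: "group_hom (Q n) (H n) (p n)" using p_hom[of n] n3 by simp
lemma pn1: "group_hom (Q (n-1)) (H (n-1)) (p (n-1))" using p_hom[of "n-1"] n3 by simp
lemma fn: "group_hom (Q n) (G n) (f n)" using f_hom[of n] n3 by simp
lemma dHn: "group_hom (H n) (H (n-1)) (dH n)" using dH_hom[of n] n3 by simp

lemma triv_H: "x \<in> carrier (Q n) \<Longrightarrow> b \<in> carrier (H n) \<Longrightarrow> sH (xi n x) b = b"
proof (cases "n = 3")
  case True
  assume x: "x \<in> carrier (Q n)" and b: "b \<in> carrier (H n)"
  have "xi (n-1) (xi n x) = \<one>\<^bsub>Q (n-2)\<^esub>" using xixi[of n x] n3 x by simp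
  hence "xi 2 (xi 3 x) = \<one>\<^bsub>Q 1\<^esub>" using True by simp
  moreover have "actH 3 \<one>\<^bsub>H 1\<^esub> b = b" using rn_act_one[OF rH, of 3 b] b True by simp
  ultimately show ?thesis unfolding sH_def using True group_hom.hom_one[OF p1h] by simp
qed (simp add: sH_def)

lemma triv_G: "x \<in> carrier (Q n) \<Longrightarrow> b \<in> carrier (G n) \<Longrightarrow> sG (xi n x) b = b"
proof (cases "n = 3")
  case True
  assume x: "x \<in> carrier (Q n)" and b: "b \<in> carrier (G n)"
  have "xi (n-1) (xi n x) = \<one>\<^bsub>Q (n-2)\<^esub>" using xixi[of n x] n3 x by simp
  hence "xi 2 (xi 3 x) = \<one>\<^bsub>Q 1\<^esub>" using True by simp
  moreover have "actG 3 \<one>\<^bsub>G 1\<^esub> b = b" using rn_act_one[OF rG, of 3 b] b True by simp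
  ultimately show ?thesis unfolding sG_def using True group_hom.hom_one[OF f1h] by simp
qed (simp add: sG_def)

lemma inv_xi: "x \<in> carrier (Q n) \<Longrightarrow> inv\<^bsub>Q (n-1)\<^esub> (xi n x) = xi n (inv\<^bsub>Q n\<^esub> x)"
  using group_hom.hom_inv[OF xin] by simp

lemma nu_closed: "x \<in> carrier (Q n) \<Longrightarrow> nu x \<in> carrier S"
  using group_hom.hom_closed[OF xin] group_hom.hom_closed[OF pn] group_hom.hom_closed[OF fn] gQn1
  by (simp add: nu_def S_def gsdp_def)

lemma nu_hom: "nu \<in> hom (Q n) S"
proof (rule homI)
  fix x assume "x \<in> carrier (Q n)" thus "nu x \<in> carrier S" by (rule nu_closed)
next
  fix x y assume x: "x \<in> carrier (Q n)" and y: "y \<in> carrier (Q n)"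
  interpret A: group "Q (n-1)" by (rule gQn1)
  interpret Qn: comm_group "Q n" by (rule cQn)
  have xx: "xi n x \<in> carrier (Q (n-1))" "xi n y \<in> carrier (Q (n-1))"
    using group_hom.hom_closed[OF xin] x y by auto
  have "xi n (x \<otimes>\<^bsub>Q n\<^esub> y) = xi n y \<otimes>\<^bsub>Q (n-1)\<^esub> xi n x"
    using Qn.m_comm[OF x y] group_hom.hom_mult[OF xin y x] by simp
  hence e1: "inv\<^bsub>Q (n-1)\<^esub> (xi n (x \<otimes>\<^bsub>Q n\<^esub> y)) = inv\<^bsub>Q (n-1)\<^esub> (xi n x) \<otimes>\<^bsub>Q (n-1)\<^esub> inv\<^bsub>Q (n-1)\<^esub> (xi n y)"
    using A.inv_mult_group[OF xx(2) xx(1)] by simp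
  have e2: "sH (inv\<^bsub>Q (n-1)\<^esub> (xi n x)) (p n y) = p n y"
    using inv_xi[OF x] triv_H[of "inv\<^bsub>Q n\<^esub> x" "p n y"] x y group_hom.hom_closed[OF pn] by simp
  have e3: "sG (inv\<^bsub>Q (n-1)\<^esub> (xi n x)) (f n y) = f n y"
    using inv_xi[OF x] triv_G[of "inv\<^bsub>Q n\<^esub> x" "f n y"] x y group_hom.hom_closed[OF fn] by simp
  show "nu (x \<otimes>\<^bsub>Q n\<^esub> y) = nu x \<otimes>\<^bsub>S\<^esub> nu y"
    using e1 e2 e3 group_hom.hom_mult[OF pn x y] group_hom.hom_mult[OF fn x y]
    by (simp add: nu_def S_def gsdp_def)
qed

lemma nu_ghom: "group_hom (Q n) S nu" by (rule ghom[OF gQn gS nu_hom])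

lemma N_sub: "subgroup (nu ` carrier (Q n)) S" using group_hom.img_is_subgroup[OF nu_ghom] .

lemma conj3:
  assumes n: "n = 3" and a: "a \<in> carrier (Q 2)" and x: "x \<in> carrier (Q 3)"
  shows "\<exists>x'\<in>carrier (Q 3). a \<otimes>\<^bsub>Q 2\<^esub> inv\<^bsub>Q 2\<^esub> (xi 3 x) \<otimes>\<^bsub>Q 2\<^esub> inv\<^bsub>Q 2\<^esub> a = inv\<^bsub>Q 2\<^esub> (xi 3 x')
     \<and> actH 3 (p 1 (xi 2 a)) (p 3 x) = p 3 x' \<and> actG 3 (f 1 (xi 2 a)) (f 3 x) = f 3 x'"
proof -
  interpret Q2: group "Q 2" using gQ[of 2] n by simp
  have g: "xi 2 a \<in> carrier (Q 1)" using group_hom.hom_closed[OF xi2h a] .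
  define x' where "x' = actQ 3 (xi 2 a) x"
  have x': "x' \<in> carrier (Q 3)" using rn_act_closed[OF rQ, of 3 "xi 2 a" x] n g x by (simp add: x'_def)
  have x3: "xi 3 x \<in> carrier (Q 2)" using xi_hom[of 3] n group_hom.hom_closed x by fastforce
  have "xi 3 x' = actQ 2 (xi 2 a) (xi 3 x)" using rn_equiv[OF rQ, of 3 "xi 2 a" x] n g x by (simp add: x'_def)
  also have "\<dots> = a \<otimes>\<^bsub>Q 2\<^esub> xi 3 x \<otimes>\<^bsub>Q 2\<^esub> inv\<^bsub>Q 2\<^esub> a" using rn_cm2[OF rQ a x3] .
  finally have "inv\<^bsub>Q 2\<^esub> (xi 3 x') = a \<otimes>\<^bsub>Q 2\<^esub> inv\<^bsub>Q 2\<^esub> (xi 3 x) \<otimes>\<^bsub>Q 2\<^esub> inv\<^bsub>Q 2\<^esub> a"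
    using a x3 by (simp add: Q2.inv_mult_group Q2.m_assoc)
  moreover have "p 3 x' = actH 3 (p 1 (xi 2 a)) (p 3 x)"
    using mor_act[OF pmor, of 3 "xi 2 a" x] n g x by (simp add: x'_def)
  moreover have "f 3 x' = actG 3 (f 1 (xi 2 a)) (f 3 x)"
    using mor_act[OF f_mor, of 3 "xi 2 a" x] n g x by (simp add: x'_def)
  ultimately show ?thesis using x' by metis
qed

lemma conjQ:
  assumes a: "a \<in> carrier (Q (n-1))" and x: "x \<in> carrier (Q n)"
  shows "\<exists>x'\<in>carrier (Q n). a \<otimes>\<^bsub>Q (n-1)\<^esub> inv\<^bsub>Q (n-1)\<^esub> (xi n x) \<otimes>\<^bsub>Q (n-1)\<^esub> inv\<^bsub>Q (n-1)\<^esub> a = inv\<^bsub>Q (n-1)\<^esub> (xi n x')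
     \<and> sH a (p n x) = p n x' \<and> sG a (f n x) = f n x'"
proof (cases "n = 3")
  case True
  have "a \<in> carrier (Q 2)" "x \<in> carrier (Q 3)" using a x True by simp_all
  from conj3[OF True this] show ?thesis unfolding sH_def sG_def using True by simp
next
  case False
  hence "comm_group (Q (n-1))" using cQ[of "n-1"] n3 by simp
  then interpret A: comm_group "Q (n-1)" .
  have "a \<otimes>\<^bsub>Q (n-1)\<^esub> inv\<^bsub>Q (n-1)\<^esub> (xi n x) \<otimes>\<^bsub>Q (n-1)\<^esub> inv\<^bsub>Q (n-1)\<^esub> a = inv\<^bsub>Q (n-1)\<^esub> (xi n x)"
    using a group_hom.hom_closed[OF xin x]
    by (metis A.inv_closed A.m_assoc A.m_comm A.r_inv A.r_one)
  thus ?thesis using x False by (auto simp: sH_def sG_def)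
qed

lemma N_normal: "nu ` carrier (Q n) \<lhd> S"
proof -
  have "\<forall>s\<in>carrier S. \<forall>h\<in>nu ` carrier (Q n). s \<otimes>\<^bsub>S\<^esub> h \<otimes>\<^bsub>S\<^esub> inv\<^bsub>S\<^esub> s \<in> nu ` carrier (Q n)"
  proof (intro ballI)
    fix s h assume s: "s \<in> carrier S" and h: "h \<in> nu ` carrier (Q n)"
    then obtain x where x: "x \<in> carrier (Q n)" and he: "h = nu x" by blast
    obtain a b c where se: "s = (a,b,c)" and a: "a \<in> carrier (Q (n-1))" and b: "b \<in> carrier (H n)" and c: "c \<in> carrier (G n)"
      using s by (auto simp: S_def gsdp_def)
    obtain x' where x': "x' \<in> carrier (Q n)"
      and e1: "a \<otimes>\<^bsub>Q (n-1)\<^esub> inv\<^bsub>Q (n-1)\<^esub> (xi n x) \<otimes>\<^bsub>Q (n-1)\<^esub> inv\<^bsub>Q (n-1)\<^esub> a = inv\<^bsub>Q (n-1)\<^esub> (xi n x')"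
      and e2: "sH a (p n x) = p n x'" and e3: "sG a (f n x) = f n x'"
      using conjQ[OF a x] by blast
    have ix': "inv\<^bsub>Q (n-1)\<^esub> (xi n x') = xi n (inv\<^bsub>Q n\<^esub> x')" using inv_xi[OF x'] .
    have ix'c: "inv\<^bsub>Q n\<^esub> x' \<in> carrier (Q n)" using x' cQn by (simp add: comm_group.axioms(2) group.inv_closed)
    have "s \<otimes>\<^bsub>S\<^esub> h \<otimes>\<^bsub>S\<^esub> inv\<^bsub>S\<^esub> s = nu x'"
      unfolding se he S_def nu_def
      apply (subst gsdp_conj[OF actS_H actS_G cHn cGn a b c])
      using x gQn1 group_hom.hom_closed[OF xin] group_hom.hom_closed[OF pn] group_hom.hom_closed[OF fn]
        e1 e2 e3 ix' triv_H[OF ix'c] triv_G[OF ix'c]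
      by (auto simp: group.inv_closed)
    thus "s \<otimes>\<^bsub>S\<^esub> h \<otimes>\<^bsub>S\<^esub> inv\<^bsub>S\<^esub> s \<in> nu ` carrier (Q n)" using x' by blast
  qed
  thus ?thesis using group.normal_inv_iff[OF gS] N_sub by blast
qed

end


lemma fibC_iff: "2 \<le> k \<Longrightarrow> ((x,y) \<in> fibC Q xi H dH p k) = (x \<in> kerC Q xi (k-1) \<and> y \<in> carrier (H k) \<and> p (k-1) x = dH k y)"
  by (simp add: fibC_def)

context mt3 begin

lemma ker_xi: assumes k: "2 \<le> k" "k \<le> n" and a: "a \<in> carrier (Q k)" shows "xi k a \<in> kerC Q xi (k-1)"
proof (cases "k = 2")
  case True thus ?thesis using group_hom.hom_closed[OF xi2h] a by (simp add: kerC_def)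
next
  case False
  have c: "xi k a \<in> carrier (Q (k-1))" using group_hom.hom_closed[OF xi_hom[OF k] a] .
  have "xi (k-1) (xi k a) = \<one>\<^bsub>Q (k-2)\<^esub>" using xixi[of k a] k False a by simp
  moreover have "k - 1 - 1 = k - 2" by simp
  moreover have "k - 1 \<noteq> 0" "k - 1 \<noteq> 1" using k False by auto
  ultimately show ?thesis using c by (simp add: kerC_def)
qed

lemma lift:
  assumes k: "2 \<le> k" "k \<le> n - 1" and xy: "(x,y) \<in> fibC Q xi H dH p k"
  shows "\<exists>a\<in>carrier (Q k). xi k a = x \<and> p k a = y"
proof -
  have x: "x \<in> kerC Q xi (k-1)" and y: "y \<in> carrier (H k)" and pxy: "p (k-1) x = dH k y"
    using xy k by (auto simp: fibC_iff)
  interpret Qk: group "Q k" using gQ[of k] k by simp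
  interpret Qk1: group "Q (k-1)" using gQ[of "k-1"] k by simp
  interpret Hk: group "H k" using gH[of k] k by simp
  interpret Hk1: group "H (k-1)" using gH[of "k-1"] k by simp
  have sk: "Suc (k-1) = k" using k by simp
  have kn: "k - 1 \<noteq> n" using k by simp
  have "p (k-1) x \<in> imC n H dH (k-1)" using pxy y sk kn by (simp add: imC_def)
  hence "x \<in> imC n Q xi (k-1)" using pi_inj[OF pmor _ _ p_iso x] k by simp
  then obtain a0 where a0: "a0 \<in> carrier (Q k)" and xa0: "x = xi k a0" using kn sk by (auto simp: imC_def)
  have pa0: "p k a0 \<in> carrier (H k)" using group_hom.hom_closed[OF p_hom a0] k by simp
  define h where "h = inv\<^bsub>H k\<^esub> (p k a0) \<otimes>\<^bsub>H k\<^esub> y"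
  have hc: "h \<in> carrier (H k)" using pa0 y by (simp add: h_def)
  have "dH k h = inv\<^bsub>H (k-1)\<^esub> (dH k (p k a0)) \<otimes>\<^bsub>H (k-1)\<^esub> dH k y"
    using group_hom.hom_mult[OF dH_hom[OF k(1)] _ y] group_hom.hom_inv[OF dH_hom[OF k(1)] pa0] pa0 k
    by (simp add: h_def)
  also have "\<dots> = \<one>\<^bsub>H (k-1)\<^esub>"
  proof -
    have c: "dH k (p k a0) \<in> carrier (H (k-1))" using group_hom.hom_closed[OF dH_hom[OF k(1)] pa0] k by simp
    have e: "dH k y = dH k (p k a0)" using p_comm[of k a0] k a0 xa0 pxy by simp
    show ?thesis using Hk1.l_inv[OF c] e by simp
  qed
  finally have "h \<in> kerC H dH k" using hc k by (simp add: kerC_def)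
  moreover have "k \<le> n" "1 \<le> k" using k by auto
  ultimately obtain a1 m where a1: "a1 \<in> kerC Q xi k" and m: "m \<in> imC n H dH k"
    and hm: "h = m \<otimes>\<^bsub>H k\<^esub> p k a1" using pi_surj[OF pmor _ _ p_iso] by blast
  have a1c: "a1 \<in> carrier (Q k)" and xa1: "xi k a1 = \<one>\<^bsub>Q (k-1)\<^esub>" using a1 k by (auto simp: kerC_def)
  obtain b where b: "b \<in> carrier (H (Suc k))" and mb: "m = dH (Suc k) b" using m k n3 by (auto simp: imC_def split: if_splits)
  obtain z where z: "z \<in> carrier (Q (Suc k))" and bz: "b = p (Suc k) z" using b p_surj[of "Suc k"] k by force
  have zc: "xi (Suc k) z \<in> carrier (Q k)" using group_hom.hom_closed[OF xi_hom[of "Suc k"] z] k by simp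
  have mz: "m = p k (xi (Suc k) z)" using p_comm[of "Suc k" z] k z mb bz by simp
  have xz: "xi k (xi (Suc k) z) = \<one>\<^bsub>Q (k-1)\<^esub>" using xixi[of "Suc k" z] k z by simp
  define a where "a = a0 \<otimes>\<^bsub>Q k\<^esub> xi (Suc k) z \<otimes>\<^bsub>Q k\<^esub> a1"
  have ac: "a \<in> carrier (Q k)" using a0 zc a1c by (simp add: a_def)
  have kle: "k \<le> n" using k by simp
  have x0c: "xi k a0 \<in> carrier (Q (k-1))" using group_hom.hom_closed[OF xi_hom[OF k(1) kle] a0] .
  have "xi k a = xi k a0 \<otimes>\<^bsub>Q (k-1)\<^esub> \<one>\<^bsub>Q (k-1)\<^esub> \<otimes>\<^bsub>Q (k-1)\<^esub> \<one>\<^bsub>Q (k-1)\<^esub>"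
    using group_hom.hom_mult[OF xi_hom[OF k(1) kle]] a0 zc a1c xz xa1 by (simp add: a_def)
  hence "xi k a = x" using Qk1.r_one[OF x0c] xa0 by simp
  moreover have "p k a = y"
  proof -
    have "p k a = p k a0 \<otimes>\<^bsub>H k\<^esub> m \<otimes>\<^bsub>H k\<^esub> p k a1"
      using group_hom.hom_mult[OF p_hom] a0 zc a1c k mz by (simp add: a_def)
    also have "\<dots> = p k a0 \<otimes>\<^bsub>H k\<^esub> h"
      using hm pa0 m group_hom.hom_closed[OF p_hom a1c] k mz group_hom.hom_closed[OF p_hom zc]
      by (simp add: Hk.m_assoc)
    also have "\<dots> = y" using pa0 y by (simp add: h_def Hk.m_assoc[symmetric])
    finally show ?thesis .
  qed
  ultimately show ?thesis using ac by blast
qed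

end


context mt3 begin

definition "phi s = (xi (n-1) (fst s), p (n-1) (fst s) \<otimes>\<^bsub>H (n-1)\<^esub> dH n (fst (snd s)))"

lemma fib_carrier: "carrier (fibGrp Q xi H dH p (n-1)) = fibC Q xi H dH p (n-1)"
  by (simp add: fibGrp_def)
lemma fib_mult: "(x,y) \<otimes>\<^bsub>fibGrp Q xi H dH p (n-1)\<^esub> (x',y') = (x \<otimes>\<^bsub>Q (n-2)\<^esub> x', y \<otimes>\<^bsub>H (n-1)\<^esub> y')"
  by (simp add: fibGrp_def numeral_2_eq_2)
lemma fib_one: "\<one>\<^bsub>fibGrp Q xi H dH p (n-1)\<^esub> = (\<one>\<^bsub>Q (n-2)\<^esub>, \<one>\<^bsub>H (n-1)\<^esub>)"
  by (simp add: fibGrp_def numeral_2_eq_2)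

lemma central3: "n = 3 \<Longrightarrow> b \<in> carrier (H 3) \<Longrightarrow> z \<in> carrier (H 2) \<Longrightarrow> dH 3 b \<otimes>\<^bsub>H 2\<^esub> z = z \<otimes>\<^bsub>H 2\<^esub> dH 3 b"
  using ker2_central[OF rH, of "dH 3 b" z] dHdH[of 3 b] group_hom.hom_closed[OF dH_hom[of 3] ] by simp

lemma central: assumes b: "b \<in> carrier (H n)" and z: "z \<in> carrier (H (n-1))"
  shows "dH n b \<otimes>\<^bsub>H (n-1)\<^esub> z = z \<otimes>\<^bsub>H (n-1)\<^esub> dH n b"
proof (cases "n = 3")
  case True thus ?thesis using central3[OF True] b z by simp
next
  case False
  hence "comm_group (H (n-1))" using cH[of "n-1"] n3 by simp
  then interpret C: comm_group "H (n-1)" .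
  show ?thesis using group_hom.hom_closed[OF dHn b] z C.m_comm by blast
qed

lemma sH_dH3:
  assumes n: "n = 3" and a: "a \<in> carrier (Q 2)" and b: "b \<in> carrier (H 3)"
  shows "dH 3 (actH 3 (p 1 (xi 2 a)) b) = dH 3 b"
proof -
  interpret H2: group "H 2" using gH[of 2] n by simp
  have p2a: "p 2 a \<in> carrier (H 2)" using group_hom.hom_closed[OF p_hom[of 2] a] n by simp
  have g: "p 1 (xi 2 a) = dH 2 (p 2 a)" using p_comm[of 2 a] n a by simp
  have gc: "p 1 (xi 2 a) \<in> carrier (H 1)" using group_hom.hom_closed[OF p1h] group_hom.hom_closed[OF xi2h a] by simp
  have y: "dH 3 b \<in> carrier (H 2)" using group_hom.hom_closed[OF dH_hom[of 3] b] n by simp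
  have "dH 3 (actH 3 (p 1 (xi 2 a)) b) = actH 2 (p 1 (xi 2 a)) (dH 3 b)"
    using rn_equiv[OF rH, of 3 "p 1 (xi 2 a)" b] n gc b by simp
  also have "\<dots> = p 2 a \<otimes>\<^bsub>H 2\<^esub> dH 3 b \<otimes>\<^bsub>H 2\<^esub> inv\<^bsub>H 2\<^esub> (p 2 a)"
    using g rn_cm2[OF rH p2a y] by simp
  also have "\<dots> = dH 3 b \<otimes>\<^bsub>H 2\<^esub> p 2 a \<otimes>\<^bsub>H 2\<^esub> inv\<^bsub>H 2\<^esub> (p 2 a)"
    using central3[OF n b p2a] by simp
  also have "\<dots> = dH 3 b" using y p2a by (simp add: H2.m_assoc)
  finally show ?thesis .
qed

lemma sH_dH: assumes a: "a \<in> carrier (Q (n-1))" and b: "b \<in> carrier (H n)"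
  shows "dH n (sH a b) = dH n b"
proof (cases "n = 3")
  case True
  have "a \<in> carrier (Q 2)" "b \<in> carrier (H 3)" using a b True by simp_all
  from sH_dH3[OF True this] show ?thesis unfolding sH_def using True by simp
qed (simp add: sH_def)

lemma phi_closed: assumes s: "s \<in> carrier S" shows "phi s \<in> fibC Q xi H dH p (n-1)"
proof -
  obtain a b c where se: "s = (a,b,c)" and a: "a \<in> carrier (Q (n-1))" and b: "b \<in> carrier (H n)" and c: "c \<in> carrier (G n)"
    using s by (auto simp: S_def gsdp_def)
  interpret Hn1: group "H (n-1)" by (rule gHn1)
  have k: "2 \<le> n - 1" "n - 1 \<le> n" using n3 by auto
  have pa: "p (n-1) a \<in> carrier (H (n-1))" using group_hom.hom_closed[OF pn1 a] .
  have db: "dH n b \<in> carrier (H (n-1))" using group_hom.hom_closed[OF dHn b] .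
  have dh1: "group_hom (H (n-1)) (H (n-1-1)) (dH (n-1))" using dH_hom[OF k] .
  have gh2: "group (H (n-1-1))" using gH[of "n-1-1"] n3 by simp
  have e1: "p (n-1-1) (xi (n-1) a) = dH (n-1) (p (n-1) a)" using p_comm[OF k a] .
  have e2: "dH (n-1) (dH n b) = \<one>\<^bsub>H (n-1-1)\<^esub>" using dHdH[of n b] n3 b by (simp add: numeral_2_eq_2)
  have "dH (n-1) (p (n-1) a \<otimes>\<^bsub>H (n-1)\<^esub> dH n b) = dH (n-1) (p (n-1) a)"
    using group_hom.hom_mult[OF dh1 pa db] e2 group_hom.hom_closed[OF dh1 pa]
      monoid.r_one[OF group.is_monoid[OF gh2]] by simp
  thus ?thesis using ker_xi[OF k a] pa db e1 k Hn1.m_closed[OF pa db] unfolding se phi_def by (simp add: fibC_iff)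
qed

lemma phi_mult: assumes s: "s \<in> carrier S" and t: "t \<in> carrier S"
  shows "phi (s \<otimes>\<^bsub>S\<^esub> t) = phi s \<otimes>\<^bsub>fibGrp Q xi H dH p (n-1)\<^esub> phi t"
proof -
  obtain a b c where se: "s = (a,b,c)" and a: "a \<in> carrier (Q (n-1))" and b: "b \<in> carrier (H n)" and c: "c \<in> carrier (G n)"
    using s by (auto simp: S_def gsdp_def)
  obtain a' b' c' where te: "t = (a',b',c')" and a': "a' \<in> carrier (Q (n-1))" and b': "b' \<in> carrier (H n)" and c': "c' \<in> carrier (G n)"
    using t by (auto simp: S_def gsdp_def)
  interpret Hn1: group "H (n-1)" by (rule gHn1)
  interpret Hn: group "H n" by (rule gHn)
  have pa: "p (n-1) a \<in> carrier (H (n-1))" using group_hom.hom_closed[OF pn1 a] .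
  have pa': "p (n-1) a' \<in> carrier (H (n-1))" using group_hom.hom_closed[OF pn1 a'] .
  have db: "dH n b \<in> carrier (H (n-1))" using group_hom.hom_closed[OF dHn b] .
  have db': "dH n b' \<in> carrier (H (n-1))" using group_hom.hom_closed[OF dHn b'] .
  have sb: "sH a b' \<in> carrier (H n)" using act_ctx.s_closed[OF actS_H a b'] .
  have e1: "dH n (b \<otimes>\<^bsub>H n\<^esub> sH a b') = dH n b \<otimes>\<^bsub>H (n-1)\<^esub> dH n b'"
    using group_hom.hom_mult[OF dHn b sb] sH_dH[OF a b'] by simp
  have e2: "xi (n-1) (a \<otimes>\<^bsub>Q (n-1)\<^esub> a') = xi (n-1) a \<otimes>\<^bsub>Q (n-2)\<^esub> xi (n-1) a'"
    using group_hom.hom_mult[OF xin1 a a'] .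
  have e3: "p (n-1) (a \<otimes>\<^bsub>Q (n-1)\<^esub> a') = p (n-1) a \<otimes>\<^bsub>H (n-1)\<^esub> p (n-1) a'"
    using group_hom.hom_mult[OF pn1 a a'] .
  have "p (n-1) a \<otimes>\<^bsub>H (n-1)\<^esub> p (n-1) a' \<otimes>\<^bsub>H (n-1)\<^esub> (dH n b \<otimes>\<^bsub>H (n-1)\<^esub> dH n b')
        = p (n-1) a \<otimes>\<^bsub>H (n-1)\<^esub> (p (n-1) a' \<otimes>\<^bsub>H (n-1)\<^esub> dH n b) \<otimes>\<^bsub>H (n-1)\<^esub> dH n b'"
    using pa pa' db db' by (simp add: Hn1.m_assoc del: One_nat_def)
  also have "\<dots> = p (n-1) a \<otimes>\<^bsub>H (n-1)\<^esub> (dH n b \<otimes>\<^bsub>H (n-1)\<^esub> p (n-1) a') \<otimes>\<^bsub>H (n-1)\<^esub> dH n b'"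
    using central[OF b pa'] by simp
  also have "\<dots> = (p (n-1) a \<otimes>\<^bsub>H (n-1)\<^esub> dH n b) \<otimes>\<^bsub>H (n-1)\<^esub> (p (n-1) a' \<otimes>\<^bsub>H (n-1)\<^esub> dH n b')"
    using pa pa' db db' by (simp add: Hn1.m_assoc del: One_nat_def)
  finally have e4: "p (n-1) a \<otimes>\<^bsub>H (n-1)\<^esub> p (n-1) a' \<otimes>\<^bsub>H (n-1)\<^esub> (dH n b \<otimes>\<^bsub>H (n-1)\<^esub> dH n b')
        = (p (n-1) a \<otimes>\<^bsub>H (n-1)\<^esub> dH n b) \<otimes>\<^bsub>H (n-1)\<^esub> (p (n-1) a' \<otimes>\<^bsub>H (n-1)\<^esub> dH n b')" .
  show ?thesis unfolding se te phi_def fib_mult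
    using e1 e2 e3 e4 by (simp add: S_def gsdp_def)
qed

lemma phi_nu: assumes x: "x \<in> carrier (Q n)" shows "phi (nu x) = (\<one>\<^bsub>Q (n-2)\<^esub>, \<one>\<^bsub>H (n-1)\<^esub>)"
proof -
  interpret Hn1: group "H (n-1)" by (rule gHn1)
  interpret Qn2: group "Q (n-2)" by (rule gQn2)
  have xc: "xi n x \<in> carrier (Q (n-1))" using group_hom.hom_closed[OF xin x] .
  have pc: "p n x \<in> carrier (H n)" using group_hom.hom_closed[OF pn x] .
  have "xi (n-1) (inv\<^bsub>Q (n-1)\<^esub> (xi n x)) = inv\<^bsub>Q (n-2)\<^esub> (xi (n-1) (xi n x))"
    using group_hom.hom_inv[OF xin1 xc] .
  also have "\<dots> = \<one>\<^bsub>Q (n-2)\<^esub>" using xixi[of n x] n3 x by simp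
  finally have e1: "xi (n-1) (inv\<^bsub>Q (n-1)\<^esub> (xi n x)) = \<one>\<^bsub>Q (n-2)\<^esub>" .
  have "p (n-1) (inv\<^bsub>Q (n-1)\<^esub> (xi n x)) = inv\<^bsub>H (n-1)\<^esub> (dH n (p n x))"
    using group_hom.hom_inv[OF pn1 xc] p_comm[of n x] n3 x by simp
  hence e2: "p (n-1) (inv\<^bsub>Q (n-1)\<^esub> (xi n x)) \<otimes>\<^bsub>H (n-1)\<^esub> dH n (p n x) = \<one>\<^bsub>H (n-1)\<^esub>"
    using Hn1.l_inv[OF group_hom.hom_closed[OF dHn pc]] by simp
  show ?thesis unfolding phi_def nu_def using e1 e2 by simp
qed

definition "u X = phi (SOME s. s \<in> X)"

lemma u_rep: assumes s: "s \<in> carrier S" shows "u (nu ` carrier (Q n) #>\<^bsub>S\<^esub> s) = phi s"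
proof -
  have "s \<in> nu ` carrier (Q n) #>\<^bsub>S\<^esub> s" using group.rcos_self[OF gS s N_sub] .
  hence "(SOME y. y \<in> nu ` carrier (Q n) #>\<^bsub>S\<^esub> s) \<in> nu ` carrier (Q n) #>\<^bsub>S\<^esub> s" by (rule someI)
  then obtain x where x: "x \<in> carrier (Q n)" and e: "(SOME y. y \<in> nu ` carrier (Q n) #>\<^bsub>S\<^esub> s) = nu x \<otimes>\<^bsub>S\<^esub> s"
    unfolding r_coset_def by blast
  have ps: "phi s \<in> fibC Q xi H dH p (n-1)" using phi_closed[OF s] .
  obtain y1 y2 where pe: "phi s = (y1, y2)" by (cases "phi s")
  have n21: "1 \<le> n - 2" using n3 by simp
  have y1: "y1 \<in> carrier (Q (n-2))" and y2: "y2 \<in> carrier (H (n-1))"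
    using ps pe n3 ker_carr[OF n21, of Q xi] by (auto simp: fibC_def numeral_2_eq_2)
  have "u (nu ` carrier (Q n) #>\<^bsub>S\<^esub> s) = phi (nu x) \<otimes>\<^bsub>fibGrp Q xi H dH p (n-1)\<^esub> phi s"
    unfolding u_def e using phi_mult[OF nu_closed[OF x] s] .
  also have "\<dots> = phi s" using phi_nu[OF x] pe fib_mult y1 y2 monoid.l_one[OF group.is_monoid[OF gQn2]] monoid.l_one[OF group.is_monoid[OF gHn1]] by simp
  finally show ?thesis .
qed

end


context mt3 begin

abbreviation "NN \<equiv> nu ` carrier (Q n)"
abbreviation "Fg \<equiv> fibGrp Q xi H dH p (n-1)"

lemma P_eq: "pushP n Q xi H actH G actG p f = S Mod NN"
  by (simp add: pushP_def sdp_eq N_eq)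
lemma pclass_eq: "pclass n Q xi H actH G actG p f a b c = NN #>\<^bsub>S\<^esub> (a,b,c)"
  by (simp add: pclass_def sdp_eq N_eq)

lemma carrP: "carrier (S Mod NN) = (\<lambda>s. NN #>\<^bsub>S\<^esub> s) ` carrier S"
  by (simp add: carrier_FactGroup)
lemma multP: "X \<otimes>\<^bsub>S Mod NN\<^esub> Y = X <#>\<^bsub>S\<^esub> Y"
  by (simp add: FactGroup_def)

lemma S_mem: "(a,b,c) \<in> carrier S \<longleftrightarrow> a \<in> carrier (Q (n-1)) \<and> b \<in> carrier (H n) \<and> c \<in> carrier (G n)"
  by (simp add: S_def gsdp_def)

lemma S_mult: "(a,b,c) \<otimes>\<^bsub>S\<^esub> (a',b',c') = (a \<otimes>\<^bsub>Q (n-1)\<^esub> a', b \<otimes>\<^bsub>H n\<^esub> sH a b', c \<otimes>\<^bsub>G n\<^esub> sG a c')"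
  by (simp add: S_def gsdp_def)

lemma u_hom: "u \<in> hom (S Mod NN) Fg"
proof (rule homI)
  fix X assume "X \<in> carrier (S Mod NN)"
  then obtain s where s: "s \<in> carrier S" and X: "X = NN #>\<^bsub>S\<^esub> s" by (auto simp: carrP)
  show "u X \<in> carrier Fg" unfolding fib_carrier X u_rep[OF s] using phi_closed[OF s] .
next
  fix X Y assume "X \<in> carrier (S Mod NN)" "Y \<in> carrier (S Mod NN)"
  then obtain s t where s: "s \<in> carrier S" and X: "X = NN #>\<^bsub>S\<^esub> s"
    and t: "t \<in> carrier S" and Y: "Y = NN #>\<^bsub>S\<^esub> t" by (auto simp: carrP)
  interpret Nn: normal NN S by (rule N_normal)
  have "X \<otimes>\<^bsub>S Mod NN\<^esub> Y = NN #>\<^bsub>S\<^esub> (s \<otimes>\<^bsub>S\<^esub> t)" using Nn.rcos_sum[OF s t] X Y by (simp add: multP)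
  thus "u (X \<otimes>\<^bsub>S Mod NN\<^esub> Y) = u X \<otimes>\<^bsub>Fg\<^esub> u Y"
    using u_rep[OF Nn.m_closed[OF s t]] u_rep[OF s] u_rep[OF t] phi_mult[OF s t] X Y by simp
qed

lemma one3: "(\<one>\<^bsub>Q (n-1)\<^esub>, \<one>\<^bsub>H n\<^esub>, c) \<in> carrier S \<longleftrightarrow> c \<in> carrier (G n)"
  using gQn1 gHn by (simp add: S_mem monoid.one_closed group.is_monoid)

lemma i_hom: "(\<lambda>c. NN #>\<^bsub>S\<^esub> (\<one>\<^bsub>Q (n-1)\<^esub>, \<one>\<^bsub>H n\<^esub>, c)) \<in> hom (G n) (S Mod NN)"
proof (rule homI)
  fix c assume "c \<in> carrier (G n)"
  thus "NN #>\<^bsub>S\<^esub> (\<one>\<^bsub>Q (n-1)\<^esub>, \<one>\<^bsub>H n\<^esub>, c) \<in> carrier (S Mod NN)" using one3 by (auto simp: carrP)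
next
  fix c c' assume c: "c \<in> carrier (G n)" and c': "c' \<in> carrier (G n)"
  interpret Nn: normal NN S by (rule N_normal)
  have o1: "\<one>\<^bsub>Q (n-1)\<^esub> \<in> carrier (Q (n-1))" using gQn1 by (simp add: monoid.one_closed group.is_monoid)
  have o2: "\<one>\<^bsub>H n\<^esub> \<in> carrier (H n)" using gHn by (simp add: monoid.one_closed group.is_monoid)
  have "(\<one>\<^bsub>Q (n-1)\<^esub>, \<one>\<^bsub>H n\<^esub>, c) \<otimes>\<^bsub>S\<^esub> (\<one>\<^bsub>Q (n-1)\<^esub>, \<one>\<^bsub>H n\<^esub>, c') = (\<one>\<^bsub>Q (n-1)\<^esub>, \<one>\<^bsub>H n\<^esub>, c \<otimes>\<^bsub>G n\<^esub> c')"
    using act_ctx.s_one[OF actS_H o2] act_ctx.s_one[OF actS_G c'] gQn1 gHn o1 o2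
    by (simp add: S_mult monoid.l_one group.is_monoid)
  thus "NN #>\<^bsub>S\<^esub> (\<one>\<^bsub>Q (n-1)\<^esub>, \<one>\<^bsub>H n\<^esub>, c \<otimes>\<^bsub>G n\<^esub> c') =
        (NN #>\<^bsub>S\<^esub> (\<one>\<^bsub>Q (n-1)\<^esub>, \<one>\<^bsub>H n\<^esub>, c)) \<otimes>\<^bsub>S Mod NN\<^esub> (NN #>\<^bsub>S\<^esub> (\<one>\<^bsub>Q (n-1)\<^esub>, \<one>\<^bsub>H n\<^esub>, c'))"
    using Nn.rcos_sum one3 c c' by (simp add: multP)
qed

end


context mt3 begin

lemma nu_mult1:
  assumes x: "x \<in> carrier (Q n)" and c: "c \<in> carrier (G n)"
  shows "nu x \<otimes>\<^bsub>S\<^esub> (\<one>\<^bsub>Q (n-1)\<^esub>, \<one>\<^bsub>H n\<^esub>, c) = (xi n (inv\<^bsub>Q n\<^esub> x), p n x, f n x \<otimes>\<^bsub>G n\<^esub> c)"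
proof -
  have ix: "inv\<^bsub>Q n\<^esub> x \<in> carrier (Q n)" using x gQn by (simp add: group.inv_closed)
  have xc: "xi n (inv\<^bsub>Q n\<^esub> x) \<in> carrier (Q (n-1))" using group_hom.hom_closed[OF xin ix] .
  have o2: "\<one>\<^bsub>H n\<^esub> \<in> carrier (H n)" using gHn by (simp add: monoid.one_closed group.is_monoid)
  have pc: "p n x \<in> carrier (H n)" using group_hom.hom_closed[OF pn x] .
  show ?thesis unfolding nu_def inv_xi[OF x] S_mult
    using triv_H[OF ix o2] triv_G[OF ix c] xc pc gQn1 gHn
    by (simp add: monoid.r_one group.is_monoid)
qed

lemma i_inj: "inj_on (\<lambda>c. NN #>\<^bsub>S\<^esub> (\<one>\<^bsub>Q (n-1)\<^esub>, \<one>\<^bsub>H n\<^esub>, c)) (carrier (G n))"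
proof (rule inj_onI)
  fix c c' assume c: "c \<in> carrier (G n)" and c': "c' \<in> carrier (G n)"
    and eq: "NN #>\<^bsub>S\<^esub> (\<one>\<^bsub>Q (n-1)\<^esub>, \<one>\<^bsub>H n\<^esub>, c) = NN #>\<^bsub>S\<^esub> (\<one>\<^bsub>Q (n-1)\<^esub>, \<one>\<^bsub>H n\<^esub>, c')"
  have "(\<one>\<^bsub>Q (n-1)\<^esub>, \<one>\<^bsub>H n\<^esub>, c) \<in> NN #>\<^bsub>S\<^esub> (\<one>\<^bsub>Q (n-1)\<^esub>, \<one>\<^bsub>H n\<^esub>, c')"
    using group.rcos_self[OF gS _ N_sub] one3 c eq by metis
  then obtain x where x: "x \<in> carrier (Q n)" and e: "(\<one>\<^bsub>Q (n-1)\<^esub>, \<one>\<^bsub>H n\<^esub>, c) = nu x \<otimes>\<^bsub>S\<^esub> (\<one>\<^bsub>Q (n-1)\<^esub>, \<one>\<^bsub>H n\<^esub>, c')"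
    unfolding r_coset_def by blast
  have e1: "xi n (inv\<^bsub>Q n\<^esub> x) = \<one>\<^bsub>Q (n-1)\<^esub>" and e2: "p n x = \<one>\<^bsub>H n\<^esub>" and e3: "c = f n x \<otimes>\<^bsub>G n\<^esub> c'"
    using e nu_mult1[OF x c'] by auto
  have "xi n x = \<one>\<^bsub>Q (n-1)\<^esub>" using e1 inv_xi[OF x] group_hom.hom_closed[OF xin x] gQn1
    by (metis group.inv_eq_1_iff)
  hence xk: "x \<in> kerC Q xi n" using x n3 by (simp add: kerC_def)
  have "p n x \<in> imC n H dH n" using e2 by (simp add: imC_def)
  hence "x \<in> imC n Q xi n" using pi_inj[OF pmor _ _ p_iso xk] n3 by simp
  hence "x = \<one>\<^bsub>Q n\<^esub>" by (simp add: imC_def)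
  thus "c = c'" using e3 group_hom.hom_one[OF fn] c' gGn by (simp add: monoid.l_one group.is_monoid)
qed

lemma i_in_ker: "c \<in> carrier (G n) \<Longrightarrow> u (NN #>\<^bsub>S\<^esub> (\<one>\<^bsub>Q (n-1)\<^esub>, \<one>\<^bsub>H n\<^esub>, c)) = \<one>\<^bsub>Fg\<^esub>"
  unfolding fib_one
  using u_rep one3 group_hom.hom_one[OF xin1] group_hom.hom_one[OF pn1] group_hom.hom_one[OF dHn] gHn1
  by (simp add: phi_def monoid.l_one group.is_monoid)

lemma ker_in_i:
  assumes s: "s \<in> carrier S" and us: "u (NN #>\<^bsub>S\<^esub> s) = \<one>\<^bsub>Fg\<^esub>"
  shows "\<exists>c\<in>carrier (G n). NN #>\<^bsub>S\<^esub> s = NN #>\<^bsub>S\<^esub> (\<one>\<^bsub>Q (n-1)\<^esub>, \<one>\<^bsub>H n\<^esub>, c)"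
proof -
  obtain a b c where se: "s = (a,b,c)" and a: "a \<in> carrier (Q (n-1))" and b: "b \<in> carrier (H n)" and c: "c \<in> carrier (G n)"
    using s by (auto simp: S_def gsdp_def)
  interpret Hn1: group "H (n-1)" by (rule gHn1)
  interpret Hn: comm_group "H n" by (rule cHn)
  interpret Qn: comm_group "Q n" by (rule cQn)
  interpret Gn: comm_group "G n" by (rule cGn)
  have "phi s = (\<one>\<^bsub>Q (n-2)\<^esub>, \<one>\<^bsub>H (n-1)\<^esub>)" using us u_rep[OF s] fib_one by simp
  hence xa: "xi (n-1) a = \<one>\<^bsub>Q (n-2)\<^esub>" and pb: "p (n-1) a \<otimes>\<^bsub>H (n-1)\<^esub> dH n b = \<one>\<^bsub>H (n-1)\<^esub>"
    by (simp_all add: phi_def se)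
  have n1: "n - 1 \<noteq> 0" "n - 1 \<noteq> 1" "n - 1 \<noteq> n" "Suc (n-1) = n" "n - 1 - 1 = n - 2" using n3 by auto
  have ak: "a \<in> kerC Q xi (n-1)" using a xa n1 by (simp add: kerC_def)
  have pac: "p (n-1) a \<in> carrier (H (n-1))" using group_hom.hom_closed[OF pn1 a] .
  have dbc: "dH n b \<in> carrier (H (n-1))" using group_hom.hom_closed[OF dHn b] .
  have "p (n-1) a = inv\<^bsub>H (n-1)\<^esub> (dH n b)" using Hn1.inv_equality[OF pb dbc pac] by simp
  also have "\<dots> = dH n (inv\<^bsub>H n\<^esub> b)" using group_hom.hom_inv[OF dHn b] by simp
  finally have "p (n-1) a \<in> imC n H dH (n-1)" using n1 b by (simp add: imC_def)
  hence "a \<in> imC n Q xi (n-1)" using pi_inj[OF pmor _ _ p_iso ak] n3 by simp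
  then obtain x where x: "x \<in> carrier (Q n)" and ax: "a = xi n x" using n1 by (auto simp: imC_def)
  have pxc: "p n x \<in> carrier (H n)" using group_hom.hom_closed[OF pn x] .
  have "dH n (p n x \<otimes>\<^bsub>H n\<^esub> b) = p (n-1) a \<otimes>\<^bsub>H (n-1)\<^esub> dH n b"
    using group_hom.hom_mult[OF dHn pxc b] p_comm[of n x] n3 x ax by simp
  hence "p n x \<otimes>\<^bsub>H n\<^esub> b \<in> kerC H dH n" using pb pxc b n3 by (simp add: kerC_def)
  from pi_surj[OF pmor _ _ p_iso this] n3 obtain w m where w: "w \<in> kerC Q xi n" and m: "m \<in> imC n H dH n"
    and pw: "p n x \<otimes>\<^bsub>H n\<^esub> b = m \<otimes>\<^bsub>H n\<^esub> p n w" by auto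
  have wc: "w \<in> carrier (Q n)" and xw: "xi n w = \<one>\<^bsub>Q (n-1)\<^esub>" using w n3 by (auto simp: kerC_def)
  have pwc: "p n w \<in> carrier (H n)" using group_hom.hom_closed[OF pn wc] .
  have pw': "p n x \<otimes>\<^bsub>H n\<^esub> b = p n w" using pw m pwc by (simp add: imC_def)
  define y where "y = inv\<^bsub>Q n\<^esub> x \<otimes>\<^bsub>Q n\<^esub> w"
  have yc: "y \<in> carrier (Q n)" using x wc by (simp add: y_def)
  have ixc: "inv\<^bsub>Q n\<^esub> x \<in> carrier (Q n)" using x by simp
  have "inv\<^bsub>Q (n-1)\<^esub> (xi n y) = a"
  proof -
    have "xi n y = xi n (inv\<^bsub>Q n\<^esub> x)"
      using group_hom.hom_mult[OF xin ixc wc] xw group_hom.hom_closed[OF xin ixc] gQn1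
      by (simp add: y_def monoid.r_one group.is_monoid)
    hence "xi n y = inv\<^bsub>Q (n-1)\<^esub> (xi n x)" using inv_xi[OF x] by simp
    thus ?thesis using ax group.inv_inv[OF gQn1 group_hom.hom_closed[OF xin x]] by simp
  qed
  moreover have "p n y = b"
    using group_hom.hom_mult[OF pn ixc wc] group_hom.hom_inv[OF pn x] pw'[symmetric] pxc b
    by (simp add: y_def Hn.m_assoc[symmetric])
  moreover define c'' where "c'' = inv\<^bsub>G n\<^esub> (f n y) \<otimes>\<^bsub>G n\<^esub> c"
  moreover have fyc: "f n y \<in> carrier (G n)" using group_hom.hom_closed[OF fn yc] .
  ultimately have e: "nu y \<otimes>\<^bsub>S\<^esub> (\<one>\<^bsub>Q (n-1)\<^esub>, \<one>\<^bsub>H n\<^esub>, c'') = (a, b, c)"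
    using nu_mult1[OF yc] inv_xi[OF yc] c
    by (simp add: Gn.m_assoc[symmetric])
  have c''c: "c'' \<in> carrier (G n)" using fyc c by (simp add: c''_def)
  have "s \<in> NN #>\<^bsub>S\<^esub> (\<one>\<^bsub>Q (n-1)\<^esub>, \<one>\<^bsub>H n\<^esub>, c'')"
    unfolding r_coset_def se using e yc by blast
  hence "NN #>\<^bsub>S\<^esub> (\<one>\<^bsub>Q (n-1)\<^esub>, \<one>\<^bsub>H n\<^esub>, c'') = NN #>\<^bsub>S\<^esub> s"
    using group.repr_independence[OF gS _ _ N_sub] one3 c''c by blast
  thus ?thesis using c''c by metis
qed

lemma u_surj: "u ` carrier (S Mod NN) = carrier Fg"
proof
  show "u ` carrier (S Mod NN) \<subseteq> carrier Fg" using u_hom by (auto simp: hom_def)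
next
  show "carrier Fg \<subseteq> u ` carrier (S Mod NN)"
  proof
    fix z assume "z \<in> carrier Fg"
    then obtain x y where z: "z = (x,y)" and xy: "(x,y) \<in> fibC Q xi H dH p (n-1)" unfolding fib_carrier by (cases z) auto
    obtain a where a: "a \<in> carrier (Q (n-1))" and xa: "xi (n-1) a = x" and ya: "p (n-1) a = y"
    proof -
      have "2 \<le> n - 1" "n - 1 \<le> n - 1" using n3 by auto
      from lift[OF this xy] show ?thesis using that by blast
    qed
    have o2: "\<one>\<^bsub>H n\<^esub> \<in> carrier (H n)" and o3: "\<one>\<^bsub>G n\<^esub> \<in> carrier (G n)"
      using gHn gGn by (simp_all add: monoid.one_closed group.is_monoid)
    have sc: "(a, \<one>\<^bsub>H n\<^esub>, \<one>\<^bsub>G n\<^esub>) \<in> carrier S" using a o2 o3 by (simp add: S_mem)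
    have "u (NN #>\<^bsub>S\<^esub> (a, \<one>\<^bsub>H n\<^esub>, \<one>\<^bsub>G n\<^esub>)) = z"
      using u_rep[OF sc] xa ya z group_hom.hom_one[OF dHn] group_hom.hom_closed[OF pn1 a] gHn1
      by (simp add: phi_def monoid.r_one group.is_monoid)
    moreover have "NN #>\<^bsub>S\<^esub> (a, \<one>\<^bsub>H n\<^esub>, \<one>\<^bsub>G n\<^esub>) \<in> carrier (S Mod NN)" using sc by (simp add: carrP)
    ultimately show "z \<in> u ` carrier (S Mod NN)" by force
  qed
qed

lemma umap_part: "1 \<le> k \<Longrightarrow> k \<le> n - 2 \<Longrightarrow> u_map Q xi p k ` carrier (Q k) = fibC Q xi H dH p k"
proof -
  assume k: "1 \<le> k" "k \<le> n - 2"
  show ?thesis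
  proof (cases "k = 1")
    case True
    thus ?thesis using p_surj[of 1] n3 by (auto simp: u_map_def fibC_def kerC_def image_def)
  next
    case False
    hence k2: "2 \<le> k" "k \<le> n" using k by auto
    show ?thesis
    proof
      show "u_map Q xi p k ` carrier (Q k) \<subseteq> fibC Q xi H dH p k"
        using ker_xi[OF k2] p_comm[OF k2] group_hom.hom_closed[OF p_hom[of k]] k2 False
        by (auto simp: u_map_def fibC_iff)
    next
      show "fibC Q xi H dH p k \<subseteq> u_map Q xi p k ` carrier (Q k)"
      proof
        fix z assume "z \<in> fibC Q xi H dH p k"
        then obtain x y where z: "z = (x,y)" and xy: "(x,y) \<in> fibC Q xi H dH p k" by (cases z) auto
        obtain a where "a \<in> carrier (Q k)" "xi k a = x" "p k a = y" using lift[OF k2(1) _ xy] k by (metis diff_le_mono2 le_trans one_le_numeral)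
        thus "z \<in> u_map Q xi p k ` carrier (Q k)" using z False by (auto simp: u_map_def image_def)
      qed
    qed
  qed
qed

lemma main:
  "(\<exists>u. u \<in> hom (pushP n Q xi H actH G actG p f) (fibGrp Q xi H dH p (n-1))
            \<and> (\<forall>a\<in>carrier (Q (n-1)). \<forall>b\<in>carrier (H n). \<forall>c\<in>carrier (G n).
                 u (pclass n Q xi H actH G actG p f a b c)
                   = (xi (n-1) a, p (n-1) a \<otimes>\<^bsub>H (n-1)\<^esub> dH n b))
            \<and> (\<lambda>c. pclass n Q xi H actH G actG p f \<one>\<^bsub>Q (n-1)\<^esub> \<one>\<^bsub>H n\<^esub> c) \<in> hom (G n) (pushP n Q xi H actH G actG p f)
            \<and> inj_on (\<lambda>c. pclass n Q xi H actH G actG p f \<one>\<^bsub>Q (n-1)\<^esub> \<one>\<^bsub>H n\<^esub> c) (carrier (G n))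
            \<and> kernel (pushP n Q xi H actH G actG p f) (fibGrp Q xi H dH p (n-1)) u = (\<lambda>c. pclass n Q xi H actH G actG p f \<one>\<^bsub>Q (n-1)\<^esub> \<one>\<^bsub>H n\<^esub> c) ` carrier (G n)
            \<and> u ` carrier (pushP n Q xi H actH G actG p f) = carrier (fibGrp Q xi H dH p (n-1)))
       \<and> (\<forall>k. 1 \<le> k \<and> k \<le> n - 2 \<longrightarrow> u_map Q xi p k ` carrier (Q k) = fibC Q xi H dH p k)"
proof (intro conjI allI impI)
  show "\<And>k. 1 \<le> k \<and> k \<le> n - 2 \<Longrightarrow> u_map Q xi p k ` carrier (Q k) = fibC Q xi H dH p k"
    using umap_part by blast
  have ker: "kernel (S Mod NN) Fg u = (\<lambda>c. NN #>\<^bsub>S\<^esub> (\<one>\<^bsub>Q (n-1)\<^esub>, \<one>\<^bsub>H n\<^esub>, c)) ` carrier (G n)"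
  proof
    show "kernel (S Mod NN) Fg u \<subseteq> (\<lambda>c. NN #>\<^bsub>S\<^esub> (\<one>\<^bsub>Q (n-1)\<^esub>, \<one>\<^bsub>H n\<^esub>, c)) ` carrier (G n)"
    proof
      fix X assume "X \<in> kernel (S Mod NN) Fg u"
      then obtain s where s: "s \<in> carrier S" and X: "X = NN #>\<^bsub>S\<^esub> s" and us: "u X = \<one>\<^bsub>Fg\<^esub>"
        by (auto simp: kernel_def carrP)
      from ker_in_i[OF s] us X show "X \<in> (\<lambda>c. NN #>\<^bsub>S\<^esub> (\<one>\<^bsub>Q (n-1)\<^esub>, \<one>\<^bsub>H n\<^esub>, c)) ` carrier (G n)" by auto
    qed
  next
    show "(\<lambda>c. NN #>\<^bsub>S\<^esub> (\<one>\<^bsub>Q (n-1)\<^esub>, \<one>\<^bsub>H n\<^esub>, c)) ` carrier (G n) \<subseteq> kernel (S Mod NN) Fg u"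
      using i_in_ker i_hom by (auto simp: kernel_def hom_def)
  qed
  show "\<exists>u. u \<in> hom (pushP n Q xi H actH G actG p f) (fibGrp Q xi H dH p (n-1))
            \<and> (\<forall>a\<in>carrier (Q (n-1)). \<forall>b\<in>carrier (H n). \<forall>c\<in>carrier (G n).
                 u (pclass n Q xi H actH G actG p f a b c)
                   = (xi (n-1) a, p (n-1) a \<otimes>\<^bsub>H (n-1)\<^esub> dH n b))
            \<and> (\<lambda>c. pclass n Q xi H actH G actG p f \<one>\<^bsub>Q (n-1)\<^esub> \<one>\<^bsub>H n\<^esub> c) \<in> hom (G n) (pushP n Q xi H actH G actG p f)
            \<and> inj_on (\<lambda>c. pclass n Q xi H actH G actG p f \<one>\<^bsub>Q (n-1)\<^esub> \<one>\<^bsub>H n\<^esub> c) (carrier (G n))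
            \<and> kernel (pushP n Q xi H actH G actG p f) (fibGrp Q xi H dH p (n-1)) u = (\<lambda>c. pclass n Q xi H actH G actG p f \<one>\<^bsub>Q (n-1)\<^esub> \<one>\<^bsub>H n\<^esub> c) ` carrier (G n)
            \<and> u ` carrier (pushP n Q xi H actH G actG p f) = carrier (fibGrp Q xi H dH p (n-1))"
    unfolding P_eq pclass_eq
  proof (intro exI[of _ u] conjI ballI)
    fix a b c assume "a \<in> carrier (Q (n-1))" "b \<in> carrier (H n)" "c \<in> carrier (G n)"
    thus "u (NN #>\<^bsub>S\<^esub> (a,b,c)) = (xi (n-1) a, p (n-1) a \<otimes>\<^bsub>H (n-1)\<^esub> dH n b)"
      using u_rep by (simp add: S_mem phi_def)
  qed (use u_hom i_hom i_inj ker u_surj in auto)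
qed

end

theorem mainTheorem3:
  fixes n :: nat
    and Q :: "nat \<Rightarrow> 'q monoid" and xi :: "nat \<Rightarrow> 'q \<Rightarrow> 'q" and actQ :: "nat \<Rightarrow> 'q \<Rightarrow> 'q \<Rightarrow> 'q"
    and H :: "nat \<Rightarrow> 'h monoid" and dH :: "nat \<Rightarrow> 'h \<Rightarrow> 'h" and actH :: "nat \<Rightarrow> 'h \<Rightarrow> 'h \<Rightarrow> 'h"
    and G :: "nat \<Rightarrow> 'g monoid" and dG :: "nat \<Rightarrow> 'g \<Rightarrow> 'g" and actG :: "nat \<Rightarrow> 'g \<Rightarrow> 'g \<Rightarrow> 'g"
    and p :: "nat \<Rightarrow> 'q \<Rightarrow> 'h" and f :: "nat \<Rightarrow> 'q \<Rightarrow> 'g"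
  assumes n3: "n \<ge> 3"
    and p_tf: "ncc_trivial_fibration n Q xi actQ H dH actH p"
    and f_mor: "ncc_morphism n Q xi actQ G dG actG f"
  defines "P \<equiv> pushP n Q xi H actH G actG p f"
    and "i \<equiv> (\<lambda>c. pclass n Q xi H actH G actG p f \<one>\<^bsub>Q (n-1)\<^esub> \<one>\<^bsub>H n\<^esub> c)"
  shows "(\<exists>u. u \<in> hom P (fibGrp Q xi H dH p (n-1))
            \<and> (\<forall>a\<in>carrier (Q (n-1)). \<forall>b\<in>carrier (H n). \<forall>c\<in>carrier (G n).
                 u (pclass n Q xi H actH G actG p f a b c)
                   = (xi (n-1) a, p (n-1) a \<otimes>\<^bsub>H (n-1)\<^esub> dH n b))
            \<and> i \<in> hom (G n) P
            \<and> inj_on i (carrier (G n))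
            \<and> kernel P (fibGrp Q xi H dH p (n-1)) u = i ` carrier (G n)
            \<and> u ` carrier P = carrier (fibGrp Q xi H dH p (n-1)))
       \<and> (\<forall>k. 1 \<le> k \<and> k \<le> n - 2 \<longrightarrow> u_map Q xi p k ` carrier (Q k) = fibC Q xi H dH p k)"
proof -
  interpret mt3 n Q xi actQ H dH actH G dG actG p f
    by (rule mt3.intro[OF n3 p_tf f_mor])
  show ?thesis unfolding P_def i_def by (rule main)
qed


end
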